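(* Let $p\in(0,1/2)$ be a fixed constant, and let $k=k(n)$ and $\delta=\delta(n)$ satisfy $k=o(n)$, $\delta=o(1)$, and $\delta\ge n^{-1+\epsilon}$ for some positive constant $\epsilon$. Then, for fixed-length algorithms, it is both necessary and sufficient to use $(1\pm o(1))\frac{n\log\frac{k}{\delta}}{D_{\mathsf{KL}}(p\|1-p)}$ queries to compute the $\mathsf{TH}_k$ function with worst-case error probability $\delta$.
   Context: For $\mathbf{x}\in\{0,1\}^n$, $\mathsf{TH}_k(\mathbf{x})=1$ if $\sum_i x_i\ge k$ and $0$ otherwise. Noisy query model: at each time step the algorithm chooses an index $i\in[n]$ (possibly adaptively, depending on previous responses) and observes $x_i\oplus Z$ with $Z\sim\mathsf{Bern}(p)$ independent of everything else; $p$ is known. A fixed-length algorithm is one whose number of queries is at most a deterministic number (not depending on the randomness of the responses); it outputs an estimate $\widehat{\mathsf{TH}}_k$, and its worst-case error probability is $\max_{\mathbf{x}}\mathbb{P}(\widehat{\mathsf{TH}}_k\neq\mathsf{TH}_k(\mathbf{x})\mid\mathbf{x})$. $D_{\mathsf{KL}}(p\|1-p)=(1-2p)\log\frac{1-p}{p}$, natural logarithm; $o(1)$ is as $n\to\infty$. *)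

theory Defs
  imports "HOL-Probability.Probability" "HOL-Library.Landau_Symbols"
begin

text \<open>Inputs x in {0,1}^n are modelled as functions nat => bool that vanish outside {0..<n}
  (index i of the paper corresponds to i-1 here).\<close>

definition inputs :: "nat \<Rightarrow> (nat \<Rightarrow> bool) set" where
  "inputs n = {x. \<forall>i\<ge>n. \<not> x i}"

definition TH :: "nat \<Rightarrow> nat \<Rightarrow> (nat \<Rightarrow> bool) \<Rightarrow> bool" where
  "TH n k x = (k \<le> card {i. i < n \<and> x i})"

definition D_KL :: "real \<Rightarrow> real" where
  "D_KL p = (1 - 2 * p) * ln ((1 - p) / p)"

text \<open>A deterministic adaptive strategy: q maps the list of responses seen so far to the next
  queried index, out maps the final list of responses to the output.  A (randomized)
  fixed-length algorithm is a probability distribution over such strategies, run for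
  exactly T queries.\<close>

type_synonym strategy = "(bool list \<Rightarrow> nat) \<times> (bool list \<Rightarrow> bool)"

fun responses :: "real \<Rightarrow> (bool list \<Rightarrow> nat) \<Rightarrow> (nat \<Rightarrow> bool) \<Rightarrow> nat \<Rightarrow> bool list pmf" where
  "responses p q x 0 = return_pmf []"
| "responses p q x (Suc t) =
     bind_pmf (responses p q x t)
       (\<lambda>hs. map_pmf (\<lambda>z. hs @ [x (q hs) \<noteq> z]) (bernoulli_pmf p))"

definition valid_alg :: "nat \<Rightarrow> strategy pmf \<Rightarrow> bool" where
  "valid_alg n A = (\<forall>s\<in>set_pmf A. \<forall>hs. fst s hs < n)"

definition output_dist :: "real \<Rightarrow> strategy pmf \<Rightarrow> nat \<Rightarrow> (nat \<Rightarrow> bool) \<Rightarrow> bool pmf" where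
  "output_dist p A T x = bind_pmf A (\<lambda>s. map_pmf (snd s) (responses p (fst s) x T))"

definition err_prob :: "real \<Rightarrow> nat \<Rightarrow> nat \<Rightarrow> strategy pmf \<Rightarrow> nat \<Rightarrow> (nat \<Rightarrow> bool) \<Rightarrow> real" where
  "err_prob p n k A T x = measure_pmf.prob (output_dist p A T x) {b. b \<noteq> TH n k x}"

definition worst_err :: "real \<Rightarrow> nat \<Rightarrow> nat \<Rightarrow> strategy pmf \<Rightarrow> nat \<Rightarrow> real" where
  "worst_err p n k A T = (SUP x\<in>inputs n. err_prob p n k A T x)"

end

theory Submission
  imports Defs
begin

definition prb :: "real \<Rightarrow> (nat\<Rightarrow>bool) \<Rightarrow> (bool list \<Rightarrow> nat) \<Rightarrow> bool list \<Rightarrow> real" where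
 "prb p x q hs = (\<Prod>j<length hs. if hs!j = x (q (take j hs)) then 1-p else p)"

lemma prb_Nil[simp]: "prb p x q [] = 1" by (simp add: prb_def)

lemma prb_snoc: "prb p x q (hs@[b]) = prb p x q hs * (if b = x (q hs) then 1-p else p)"
proof -
  have "prb p x q (hs@[b]) = (\<Prod>j<Suc (length hs). if (hs@[b])!j = x (q (take j (hs@[b]))) then 1-p else p)"
    by (simp add: prb_def)
  also have "\<dots> = (\<Prod>j<length hs. if (hs@[b])!j = x (q (take j (hs@[b]))) then 1-p else p) * (if b = x (q hs) then 1-p else p)"
    by (simp add: prod.lessThan_Suc)
  also have "(\<Prod>j<length hs. if (hs@[b])!j = x (q (take j (hs@[b]))) then 1-p else p) = prb p x q hs"
    unfolding prb_def by (intro prod.cong) (auto simp: nth_append)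
  finally show ?thesis .
qed

lemma pmf_resp:
  assumes "0 \<le> p" "p \<le> 1"
  shows "pmf (responses p q x t) hs = (if length hs = t then prb p x q hs else 0)"
proof (induction t arbitrary: hs)
  case 0
  then show ?case by (auto simp: indicator_def)
next
  case (Suc t)
  have "pmf (responses p q x (Suc t)) hs =
     (\<integral>a. pmf (map_pmf (\<lambda>z. a @ [x (q a) \<noteq> z]) (bernoulli_pmf p)) hs \<partial>measure_pmf (responses p q x t))"
    by (simp add: pmf_bind)
  also have "\<dots> = (\<Sum>a\<in>{a. length a = t}. pmf (map_pmf (\<lambda>z. a @ [x (q a) \<noteq> z]) (bernoulli_pmf p)) hs * pmf (responses p q x t) a)"
  proof (rule integral_measure_pmf_real)
    show "finite {a::bool list. length a = t}" using finite_lists_length_eq[of "UNIV::bool set" t] by simp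
  next
    fix a assume "a \<in> set_pmf (responses p q x t)"
    then have "pmf (responses p q x t) a \<noteq> 0" by (simp add: set_pmf_eq)
    then show "a \<in> {a. length a = t}" using Suc.IH[of a] by (auto split: if_splits)
  qed
  also have "\<dots> = (if length hs = Suc t then prb p x q hs else 0)"
  proof (cases "length hs = Suc t")
    case True
    then obtain a b where hs: "hs = a @ [b]" and la: "length a = t"
      by (metis length_Suc_conv_rev)
    have z: "pmf (map_pmf (\<lambda>z. a' @ [x (q a') \<noteq> z]) (bernoulli_pmf p)) hs = 0" if "a' \<noteq> a" for a'
      by (rule pmf_map_outside) (use that hs in auto)
    have "(\<Sum>a'\<in>{a. length a = t}. pmf (map_pmf (\<lambda>z. a' @ [x (q a') \<noteq> z]) (bernoulli_pmf p)) hs * pmf (responses p q x t) a')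
       = pmf (map_pmf (\<lambda>z. a @ [x (q a) \<noteq> z]) (bernoulli_pmf p)) hs * pmf (responses p q x t) a"
      by (subst sum.remove[of _ a]) (use la finite_lists_length_eq[of "UNIV::bool set" t] z in auto)
    also have "pmf (map_pmf (\<lambda>z. a @ [x (q a) \<noteq> z]) (bernoulli_pmf p)) hs = (if b = x (q a) then 1-p else p)"
    proof -
      have "pmf (map_pmf (\<lambda>z. a @ [x (q a) \<noteq> z]) (bernoulli_pmf p)) hs = measure_pmf.prob (bernoulli_pmf p) {z. (x (q a) \<noteq> z) = b}"
        by (simp add: pmf_map hs vimage_def)
      also have "{z. (x (q a) \<noteq> z) = b} = {x (q a) \<noteq> b}" by auto
      also have "measure_pmf.prob (bernoulli_pmf p) {x (q a) \<noteq> b} = (if b = x (q a) then 1-p else p)"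
        using assms by (simp add: measure_pmf_single)
      finally show ?thesis .
    qed
    finally show ?thesis using True hs la Suc.IH[of a] by (simp add: prb_snoc mult.commute)
  next
    case False
    have "pmf (map_pmf (\<lambda>z. a @ [x (q a) \<noteq> z]) (bernoulli_pmf p)) hs = 0" if "length a = t" for a
      by (rule pmf_map_outside) (use that False in auto)
    then show ?thesis using False by simp
  qed
  finally show ?case .
qed

definition LL :: "nat \<Rightarrow> bool list set" where "LL t = {hs. length hs = t}"

lemma finite_LL[simp]: "finite (LL t)"
proof -
  have "finite {xs. set xs \<subseteq> (UNIV::bool set) \<and> length xs = t}" by (rule finite_lists_length_eq) simp
  then show ?thesis by (simp add: LL_def)
qed

definition Ee :: "real \<Rightarrow> (bool list \<Rightarrow> nat) \<Rightarrow> (nat \<Rightarrow> bool) \<Rightarrow> nat \<Rightarrow> (bool list \<Rightarrow> real) \<Rightarrow> real" where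
  "Ee p q x t f = (\<Sum>hs\<in>LL t. prb p x q hs * f hs)"

lemma int_resp:
  assumes "0 \<le> p" "p \<le> 1"
  shows "(\<integral>hs. f hs \<partial>measure_pmf (responses p q x t)) = Ee p q x t f"
  unfolding Ee_def
  by (subst integral_measure_pmf_real[of "LL t"])
     (use finite_LL[of t] in \<open>auto simp: pmf_resp[OF assms] LL_def set_pmf_eq mult.commute split: if_splits intro!: sum.cong\<close>)

lemma sum_LL_Suc: "(\<Sum>hs\<in>LL (Suc t). g hs) = (\<Sum>hs\<in>LL t. g (hs@[True]) + g (hs@[False]))"
proof -
  have e: "LL (Suc t) = (\<lambda>(a,b). a@[b]) ` (LL t \<times> UNIV)"
    by (auto simp: LL_def image_iff length_Suc_conv_rev)
  have i: "inj_on (\<lambda>(a::bool list,b::bool). a@[b]) (LL t \<times> UNIV)"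
    by (auto simp: inj_on_def)
  have "(\<Sum>hs\<in>LL (Suc t). g hs) = (\<Sum>(a,b)\<in>LL t \<times> UNIV. g (a@[b]))"
    unfolding e by (subst sum.reindex[OF i]) (simp add: case_prod_unfold)
  also have "\<dots> = (\<Sum>a\<in>LL t. \<Sum>b\<in>UNIV. g (a@[b]))"
    by (simp add: sum.cartesian_product)
  also have "\<dots> = (\<Sum>hs\<in>LL t. g (hs@[True]) + g (hs@[False]))"
    by (simp add: UNIV_bool add.commute)
  finally show ?thesis .
qed

lemma Ee_Suc:
  "Ee p q x (Suc t) f = Ee p q x t (\<lambda>hs. p * f (hs@[\<not> x (q hs)]) + (1-p) * f (hs@[x (q hs)]))"
  unfolding Ee_def sum_LL_Suc
  by (intro sum.cong) (auto simp: prb_snoc algebra_simps)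

lemma Ee_0[simp]: "Ee p q x 0 f = f []"
  by (simp add: Ee_def LL_def)

lemma prb_nonneg: "0 \<le> p \<Longrightarrow> p \<le> 1 \<Longrightarrow> 0 \<le> prb p x q hs"
  unfolding prb_def by (intro prod_nonneg) auto

lemma Ee_mono: "0 \<le> p \<Longrightarrow> p \<le> 1 \<Longrightarrow> (\<And>hs. f hs \<le> g hs) \<Longrightarrow> Ee p q x t f \<le> Ee p q x t g"
  unfolding Ee_def by (intro sum_mono mult_left_mono) (auto simp: prb_nonneg)

lemma Ee_add: "Ee p q x t (\<lambda>hs. f hs + g hs) = Ee p q x t f + Ee p q x t g"
  unfolding Ee_def by (simp add: sum.distrib algebra_simps)

lemma Ee_cmult: "Ee p q x t (\<lambda>hs. c * f hs) = c * Ee p q x t f"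
  unfolding Ee_def by (simp add: sum_distrib_left algebra_simps)

lemma Ee_const: "Ee p q x t (\<lambda>hs. c) = c"
proof (induction t)
  case (Suc t) then show ?case by (simp add: Ee_Suc algebra_simps)
qed simp

lemma Ee_super:
  assumes "0 \<le> p" "p \<le> 1" "0 \<le> \<beta>"
    and "\<And>hs. p * Vq (hs@[\<not> x (q hs)]) + (1-p) * Vq (hs@[x (q hs)]) \<le> \<beta> * Vq hs"
  shows "Ee p q x t Vq \<le> \<beta>^t * Vq []"
proof (induction t)
  case (Suc t)
  have "Ee p q x (Suc t) Vq \<le> Ee p q x t (\<lambda>hs. \<beta> * Vq hs)"
    unfolding Ee_Suc by (rule Ee_mono) (use assms in auto)
  also have "\<dots> \<le> \<beta> * (\<beta>^t * Vq [])"
    unfolding Ee_cmult using Suc assms by (intro mult_left_mono) auto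
  finally show ?case by simp
qed simp

type_synonym ast = "nat \<times> int \<times> nat"

definition sgn1 :: "bool \<Rightarrow> int" where "sgn1 h = (if h then 1 else -1)"

definition astep :: "nat \<Rightarrow> nat \<Rightarrow> nat \<Rightarrow> nat \<Rightarrow> ast \<Rightarrow> bool \<Rightarrow> ast" where
 "astep n k a b s h = (case s of (i,w,d) \<Rightarrow> if n \<le> i \<or> k \<le> d then (i,w,d) else
     (if int b \<le> w + sgn1 h then (Suc i, 0, Suc d)
      else if w + sgn1 h \<le> - int a then (Suc i, 0, d) else (i, w + sgn1 h, d)))"

definition wrong :: "nat \<Rightarrow> nat \<Rightarrow> nat \<Rightarrow> nat \<Rightarrow> (nat \<Rightarrow> bool) \<Rightarrow> ast \<Rightarrow> bool \<Rightarrow> bool" where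
 "wrong n k a b x s h = (case s of (i,w,d) \<Rightarrow> \<not>(n \<le> i \<or> k \<le> d) \<and>
     ((int b \<le> w + sgn1 h \<and> \<not> x i) \<or> (w + sgn1 h < int b \<and> w + sgn1 h \<le> - int a \<and> x i)))"

definition gstep :: "nat \<Rightarrow> nat \<Rightarrow> nat \<Rightarrow> nat \<Rightarrow> (nat \<Rightarrow> bool) \<Rightarrow> ast \<times> bool \<Rightarrow> bool \<Rightarrow> ast \<times> bool" where
 "gstep n k a b x g h = (astep n k a b (fst g) h, snd g \<or> wrong n k a b x (fst g) h)"

definition ast :: "nat \<Rightarrow> nat \<Rightarrow> nat \<Rightarrow> nat \<Rightarrow> bool list \<Rightarrow> ast" where
 "ast n k a b hs = foldl (astep n k a b) (0,0,0) hs"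

definition gst :: "nat \<Rightarrow> nat \<Rightarrow> nat \<Rightarrow> nat \<Rightarrow> (nat \<Rightarrow> bool) \<Rightarrow> bool list \<Rightarrow> ast \<times> bool" where
 "gst n k a b x hs = foldl (gstep n k a b x) ((0,0,0),False) hs"

lemma gst_snoc: "gst n k a b x (hs@[h]) = gstep n k a b x (gst n k a b x hs) h"
  by (simp add: gst_def)

lemma fst_gst: "fst (gst n k a b x hs) = ast n k a b hs"
  by (induction hs rule: rev_induct) (auto simp: gst_def ast_def gstep_def)

definition aq :: "nat \<Rightarrow> nat \<Rightarrow> nat \<Rightarrow> nat \<Rightarrow> bool list \<Rightarrow> nat" where
 "aq n k a b hs = (case ast n k a b hs of (i,w,d) \<Rightarrow> if i < n then i else 0)"

definition aout :: "nat \<Rightarrow> nat \<Rightarrow> nat \<Rightarrow> nat \<Rightarrow> bool list \<Rightarrow> bool" where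
 "aout n k a b hs = (case ast n k a b hs of (i,w,d) \<Rightarrow> k \<le> d)"

definition Inv :: "nat \<Rightarrow> nat \<Rightarrow> nat \<Rightarrow> nat \<Rightarrow> (nat \<Rightarrow> bool) \<Rightarrow> ast \<times> bool \<Rightarrow> bool" where
 "Inv n k a b x g = (case g of ((i,w,d),bad) \<Rightarrow> i \<le> n \<and> - int a < w \<and> w < int b \<and>
     (\<not> bad \<longrightarrow> d = card {j. j < i \<and> x j}))"

lemma card_less_Suc: "card {j. j < Suc i \<and> x j} = card {j. j < i \<and> x j} + (if x i then 1 else 0)"
proof -
  have "{j. j < Suc i \<and> x j} = (if x i then insert i {j. j < i \<and> x j} else {j. j < i \<and> x j})"
    by (auto simp: less_Suc_eq)
  then show ?thesis by auto
qed

lemma Inv_init: "Inv n k a b x ((0,0,0),False) \<longleftrightarrow> 1 \<le> a \<and> 1 \<le> b"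
  by (auto simp: Inv_def)

lemma Inv_step:
  assumes "1 \<le> a" "1 \<le> b" "Inv n k a b x g"
  shows "Inv n k a b x (gstep n k a b x g h)"
  using assms
  by (cases g) (auto simp: Inv_def gstep_def astep_def wrong_def sgn1_def card_less_Suc split: if_splits)

lemma Inv_gst: "1 \<le> a \<Longrightarrow> 1 \<le> b \<Longrightarrow> Inv n k a b x (gst n k a b x hs)"
  by (induction hs rule: rev_induct) (auto simp: gst_snoc Inv_step, simp add: gst_def Inv_def)

lemma aout_correct:
  assumes "Inv n k a b x ((i,w,d),False)" "n \<le> i \<or> k \<le> d"
  shows "(k \<le> d) = TH n k x"
proof -
  have d: "d = card {j. j < i \<and> x j}" "i \<le> n" using assms by (auto simp: Inv_def)
  have "card {j. j < i \<and> x j} \<le> card {j. j < n \<and> x j}"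
    by (rule card_mono) (use d in auto)
  then show ?thesis using assms d unfolding TH_def by (auto)
qed

definition Zc :: "nat \<Rightarrow> (nat \<Rightarrow> bool) \<Rightarrow> nat \<Rightarrow> nat" where
  "Zc n x i = card {j. i \<le> j \<and> j < n \<and> \<not> x j}"
definition Oc :: "nat \<Rightarrow> (nat \<Rightarrow> bool) \<Rightarrow> nat \<Rightarrow> nat" where
  "Oc n x i = card {j. i \<le> j \<and> j < n \<and> x j}"

lemma Zc_step: "i < n \<Longrightarrow> Zc n x i = (if x i then 0 else 1) + Zc n x (Suc i)"
proof -
  assume "i < n"
  then have "{j. i \<le> j \<and> j < n \<and> \<not> x j} = (if x i then {j. Suc i \<le> j \<and> j < n \<and> \<not> x j} else insert i {j. Suc i \<le> j \<and> j < n \<and> \<not> x j})"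
    by (auto simp: Suc_le_eq le_less)
  then show ?thesis by (simp add: Zc_def)
qed

lemma Oc_step: "i < n \<Longrightarrow> Oc n x i = (if x i then 1 else 0) + Oc n x (Suc i)"
proof -
  assume "i < n"
  then have "{j. i \<le> j \<and> j < n \<and> x j} = (if x i then insert i {j. Suc i \<le> j \<and> j < n \<and> x j} else {j. Suc i \<le> j \<and> j < n \<and> x j})"
    by (auto simp: Suc_le_eq le_less)
  then show ?thesis by (simp add: Oc_def)
qed

lemma Zc_le: "Zc n x i \<le> n"
proof -
  have "Zc n x i \<le> card {..<n}" unfolding Zc_def by (rule card_mono) auto
  then show ?thesis by simp
qed


lemma gstep_act:
  assumes "\<not> (n \<le> i \<or> k \<le> d)"
  shows "gstep n k a b x ((i,w,d),bad) h =
    (if int b \<le> w + sgn1 h then ((Suc i,0,Suc d), bad \<or> \<not> x i)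
     else if w + sgn1 h \<le> - int a then ((Suc i,0,d), bad \<or> x i) else ((i,w + sgn1 h,d), bad))"
  using assms by (simp add: gstep_def astep_def wrong_def)

lemma gstep_inact:
  assumes "n \<le> i \<or> k \<le> d"
  shows "gstep n k a b x ((i,w,d),bad) h = ((i,w,d),bad)"
  using assms by (auto simp: gstep_def astep_def wrong_def)

locale UB =
  fixes n k a b :: nat and x :: "nat \<Rightarrow> bool" and c :: real
  assumes a1: "1 \<le> a" and b1: "1 \<le> b" and c0: "0 < c"
begin

definition Fp :: "nat \<Rightarrow> nat \<Rightarrow> real" where
  "Fp i d = exp (-c*b) * Zc n x i + exp (-c*a) * min (Oc n x i) (k - d)"

definition cur :: "nat \<Rightarrow> int \<Rightarrow> real" where
  "cur i w = (if x i then exp (-c * (w + a)) else exp (c * (w - b)))"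

definition Phi1 :: "ast \<times> bool \<Rightarrow> real" where
  "Phi1 g = (case g of ((i,w,d),bad) \<Rightarrow> if bad then 1 else if n \<le> i \<or> k \<le> d then 0
      else cur i w - cur i 0 + Fp i d)"

lemma cur0: "cur i 0 = (if x i then exp (-c*a) else exp (-c*b))"
  by (simp add: cur_def)

lemma Fp_zero: "i < n \<Longrightarrow> \<not> x i \<Longrightarrow> Fp i d = exp (-c*b) + Fp (Suc i) d"
  by (simp add: Fp_def Zc_step Oc_step algebra_simps)

lemma Fp_one: "i < n \<Longrightarrow> x i \<Longrightarrow> d < k \<Longrightarrow> Fp i d = exp (-c*a) + Fp (Suc i) (Suc d)"
proof -
  assume h: "i < n" "x i" "d < k"
  have m: "min (Oc n x i) (k - d) = 1 + min (Oc n x (Suc i)) (k - Suc d)"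
  proof -
    have "k - d = Suc (k - Suc d)" using h by simp
    then show ?thesis using h Oc_step[of i n x] by (simp add: min_Suc_Suc)
  qed
  show ?thesis unfolding Fp_def using h Zc_step[of i n x] by (simp add: m algebra_simps)
qed

lemma Fp_nonneg: "0 \<le> Fp i d"
  by (simp add: Fp_def)

lemma Fp_ge_cur0: "i < n \<Longrightarrow> d < k \<Longrightarrow> cur i 0 \<le> Fp i d"
proof -
  assume h: "i < n" "d < k"
  show ?thesis
  proof (cases "x i")
    case True
    then show ?thesis using Fp_one[OF h(1) True h(2)] Fp_nonneg[of "Suc i" "Suc d"] by (simp add: cur0)
  next
    case False
    then show ?thesis using Fp_zero[OF h(1) False] Fp_nonneg[of "Suc i" d] by (simp add: cur0)
  qed
qed

lemma cur_ge1:
  assumes "x i \<Longrightarrow> w \<le> - int a" "\<not> x i \<Longrightarrow> int b \<le> w"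
  shows "1 \<le> cur i w"
proof (cases "x i")
  case True
  then have "real_of_int w + real a \<le> 0" using assms by linarith
  then have "c * (real_of_int w + real a) \<le> 0" using c0 by (simp add: mult_nonneg_nonpos)
  then show ?thesis using True by (simp add: cur_def)
next
  case False
  then have "0 \<le> real_of_int w - real b" using assms by linarith
  then have "0 \<le> c * (real_of_int w - real b)" using c0 by simp
  then show ?thesis using False by (simp add: cur_def)
qed


lemma Phi1_stepA:
  assumes inv: "Inv n k a b x ((i,w,d),False)" and act: "\<not> (n \<le> i \<or> k \<le> d)"
  shows "Phi1 (gstep n k a b x ((i,w,d),False) h) \<le> cur i (w + sgn1 h) - cur i 0 + Fp i d"
proof -
  have i: "i < n" "d < k" using act by auto
  have w: "- int a < w" "w < int b" using inv by (auto simp: Inv_def)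
  have cpos: "0 \<le> cur i v" for v by (simp add: cur_def)
  have base: "cur i 0 \<le> Fp i d" using Fp_ge_cur0 i by auto
  show ?thesis
  proof (cases "int b \<le> w + sgn1 h")
    case True
    show ?thesis
    proof (cases "x i")
      case xi: True
      have "Phi1 (gstep n k a b x ((i,w,d),False) h) \<le> Fp (Suc i) (Suc d)"
        using True xi act by (simp add: gstep_act Phi1_def Fp_nonneg)
      also have "\<dots> = Fp i d - cur i 0" using Fp_one[OF i(1) xi i(2)] xi by (simp only: cur0 if_True)
      finally show ?thesis using cpos[of "w + sgn1 h"] by linarith
    next
      case xi: False
      have "Phi1 (gstep n k a b x ((i,w,d),False) h) = 1"
        using True xi act by (simp add: gstep_act Phi1_def)
      moreover have "1 \<le> cur i (w + sgn1 h)" by (rule cur_ge1) (use True xi in auto)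
      ultimately show ?thesis using base by linarith
    qed
  next
    case nb: False
    show ?thesis
    proof (cases "w + sgn1 h \<le> - int a")
      case True
      show ?thesis
      proof (cases "x i")
        case xi: True
        have "Phi1 (gstep n k a b x ((i,w,d),False) h) = 1"
          using True nb xi act by (simp add: gstep_act Phi1_def)
        moreover have "1 \<le> cur i (w + sgn1 h)" by (rule cur_ge1) (use True xi in auto)
        ultimately show ?thesis using base by linarith
      next
        case xi: False
        have "Phi1 (gstep n k a b x ((i,w,d),False) h) \<le> Fp (Suc i) d"
          using True nb xi act by (simp add: gstep_act Phi1_def Fp_nonneg)
        also have "\<dots> = Fp i d - cur i 0" using Fp_zero[OF i(1) xi] xi by (simp only: cur0 if_False)
        finally show ?thesis using cpos[of "w + sgn1 h"] by linarith
      qed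
    next
      case False
      then show ?thesis using nb act
        by (simp add: gstep_act Phi1_def)
    qed
  qed
qed


lemma cur_mart:
  assumes p: "0 < p" "p < 1" "exp c = (1-p)/p"
  shows "p * cur i (w + sgn1 (\<not> x i)) + (1-p) * cur i (w + sgn1 (x i)) = cur i w"
proof -
  have e1: "exp (-c) = p/(1-p)" using p by (simp add: exp_minus)
  have k: "p * exp c + (1-p) * exp (-c) = 1" using p e1 by (simp add: field_simps)
  show ?thesis
  proof (cases "x i")
    case True
    have "p * exp (-c * (real_of_int (w - 1) + real a)) + (1-p) * exp (-c * (real_of_int (w + 1) + real a))
       = exp (-c * (real_of_int w + real a)) * (p * exp c + (1-p) * exp (-c))"
      by (simp add: algebra_simps flip: exp_add)
    then show ?thesis using True k by (simp add: cur_def sgn1_def)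
  next
    case False
    have "p * exp (c * (real_of_int (w + 1) - real b)) + (1-p) * exp (c * (real_of_int (w - 1) - real b))
       = exp (c * (real_of_int w - real b)) * (p * exp c + (1-p) * exp (-c))"
      by (simp add: algebra_simps flip: exp_add)
    then show ?thesis using False k by (simp add: cur_def sgn1_def)
  qed
qed

lemma Phi1_nonneg: "0 \<le> Phi1 g"
proof -
  obtain i w d bad where g: "g = ((i,w,d),bad)" by (metis prod.exhaust)
  have "0 \<le> cur i w - cur i 0 + Fp i d" if "i < n" "d < k"
  proof -
    have "0 \<le> cur i w" by (simp add: cur_def)
    then show ?thesis using Fp_ge_cur0[OF that] by linarith
  qed
  then show ?thesis using g by (auto simp: Phi1_def)
qed

lemma Phi1_super:
  assumes p: "0 < p" "p < 1" "exp c = (1-p)/p"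
    and inv: "Inv n k a b x g"
    and j: "\<not> (n \<le> fst (fst g) \<or> k \<le> snd (snd (fst g))) \<Longrightarrow> j = fst (fst g)"
  shows "p * Phi1 (gstep n k a b x g (\<not> x j)) + (1-p) * Phi1 (gstep n k a b x g (x j)) \<le> Phi1 g"
proof -
  obtain i w d bad where g: "g = ((i,w,d),bad)" by (metis prod.exhaust)
  show ?thesis
  proof (cases "n \<le> i \<or> k \<le> d")
    case True
    then show ?thesis using g by (simp add: gstep_inact algebra_simps)
  next
    case act: False
    then have ji: "j = i" using j g by simp
    show ?thesis
    proof (cases bad)
      case True
      then show ?thesis using g act by (simp add: gstep_act Phi1_def algebra_simps)
    next
      case False
      have inv': "Inv n k a b x ((i,w,d),False)" using inv g False by simp
      have "p * Phi1 (gstep n k a b x g (\<not> x j)) + (1-p) * Phi1 (gstep n k a b x g (x j))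
        \<le> p * (cur i (w + sgn1 (\<not> x i)) - cur i 0 + Fp i d) + (1-p) * (cur i (w + sgn1 (x i)) - cur i 0 + Fp i d)"
        using Phi1_stepA[OF inv' act] p g False ji
        by (intro add_mono mult_left_mono) auto
      also have "\<dots> = cur i w - cur i 0 + Fp i d" using cur_mart[OF p, of i w] by (simp add: algebra_simps)
      also have "\<dots> = Phi1 g" using g False act by (simp add: Phi1_def)
      finally show ?thesis .
    qed
  qed
qed

definition dst :: "nat \<Rightarrow> int \<Rightarrow> real" where
  "dst i w = (if x i then real b - w else w + real a)"

definition Hp :: "nat \<Rightarrow> nat \<Rightarrow> real" where
  "Hp i d = real a * Zc n x i + real b * min (Oc n x i) (k - d)"

definition Psi :: "real \<Rightarrow> ast \<times> bool \<Rightarrow> real" where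
  "Psi \<mu> g = (case g of ((i,w,d),_) \<Rightarrow> if n \<le> i \<or> k \<le> d then 0 else exp (\<mu> * (dst i w - dst i 0 + Hp i d)))"

lemma Hp_zero: "i < n \<Longrightarrow> \<not> x i \<Longrightarrow> Hp i d = a + Hp (Suc i) d"
  by (simp add: Hp_def Zc_step Oc_step algebra_simps)

lemma Hp_one: "i < n \<Longrightarrow> x i \<Longrightarrow> d < k \<Longrightarrow> Hp i d = b + Hp (Suc i) (Suc d)"
proof -
  assume h: "i < n" "x i" "d < k"
  have m: "min (Oc n x i) (k - d) = 1 + min (Oc n x (Suc i)) (k - Suc d)"
  proof -
    have "k - d = Suc (k - Suc d)" using h by simp
    then show ?thesis using h Oc_step[of i n x] by (simp add: min_Suc_Suc)
  qed
  show ?thesis unfolding Hp_def using h Zc_step[of i n x] by (simp add: m algebra_simps)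
qed

lemma Hp_mono1: "Hp i (Suc d) \<le> Hp i d"
proof -
  have "min (Oc n x i) (k - Suc d) \<le> min (Oc n x i) (k - d)" by simp
  then have "real (min (Oc n x i) (k - Suc d)) \<le> real (min (Oc n x i) (k - d))" by linarith
  then show ?thesis unfolding Hp_def by (intro add_left_mono mult_left_mono) auto
qed

lemma Hp_mono2: "Hp i d \<le> b + Hp i (Suc d)"
proof -
  have "k - d \<le> Suc (k - Suc d)" by arith
  then have "min (Oc n x i) (k - d) \<le> min (Oc n x i) (Suc (k - Suc d))" by (rule min.mono[OF order_refl])
  also have "\<dots> \<le> 1 + min (Oc n x i) (k - Suc d)" by (simp add: min_def)
  finally have "min (Oc n x i) (k - d) \<le> 1 + min (Oc n x i) (k - Suc d)" .
  then have "real (min (Oc n x i) (k - d)) \<le> 1 + real (min (Oc n x i) (k - Suc d))" by linarith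
  then have "real b * min (Oc n x i) (k - d) \<le> real b * (1 + real (min (Oc n x i) (k - Suc d)))"
    by (intro mult_left_mono) auto
  then show ?thesis unfolding Hp_def by (simp add: algebra_simps)
qed

lemma Hp_nonneg: "0 \<le> Hp i d" by (simp add: Hp_def)

lemma Psi_stepA:
  assumes inv: "Inv n k a b x ((i,w,d),bad)" and act: "\<not> (n \<le> i \<or> k \<le> d)" and mu: "0 \<le> \<mu>"
  shows "Psi \<mu> (gstep n k a b x ((i,w,d),bad) h) \<le> exp (\<mu> * (dst i (w + sgn1 h) - dst i 0 + Hp i d))"
proof -
  have i: "i < n" "d < k" using act by auto
  have w: "- int a < w" "w < int b" using inv by (auto simp: Inv_def)
  have s: "sgn1 h = 1 \<or> sgn1 h = -1" by (simp add: sgn1_def)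
  have key: "exp (\<mu> * Hp i' d') \<le> exp (\<mu> * (dst i (w + sgn1 h) - dst i 0 + Hp i d))"
    if "Hp i' d' \<le> dst i (w + sgn1 h) - dst i 0 + Hp i d" for i' d'
    using that mu by (simp add: mult_left_mono)
  show ?thesis
  proof (cases "int b \<le> w + sgn1 h")
    case True
    then have wb: "w + sgn1 h = int b" using w s by auto
    have "Hp (Suc i) (Suc d) \<le> dst i (w + sgn1 h) - dst i 0 + Hp i d"
    proof (cases "x i")
      case True then show ?thesis using Hp_one[OF i(1) True i(2)] wb by (simp add: dst_def)
    next
      case False then show ?thesis using Hp_zero[OF i(1) False, of d] Hp_mono1[of "Suc i" d] wb by (simp add: dst_def)
    qed
    then show ?thesis using True act key[of "Suc i" "Suc d"]
      by (simp add: gstep_act Psi_def dst_def)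
  next
    case nb: False
    show ?thesis
    proof (cases "w + sgn1 h \<le> - int a")
      case True
      then have wa: "w + sgn1 h = - int a" using w s by auto
      have "Hp (Suc i) d \<le> dst i (w + sgn1 h) - dst i 0 + Hp i d"
      proof (cases "x i")
        case True then show ?thesis using Hp_one[OF i(1) True i(2)] Hp_mono2[of "Suc i" d] wa by (simp add: dst_def)
      next
        case False then show ?thesis using Hp_zero[OF i(1) False, of d] wa by (simp add: dst_def)
      qed
      then show ?thesis using True nb act key[of "Suc i" d]
        by (simp add: gstep_act Psi_def dst_def)
    next
      case False
      then show ?thesis using nb act by (simp add: gstep_act Psi_def)
    qed
  qed
qed

lemma Psi_super:
  assumes p: "0 < p" "p < 1" and mu: "0 \<le> \<mu>" and beta: "p * exp \<mu> + (1-p) * exp (-\<mu>) \<le> \<beta>"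
    and inv: "Inv n k a b x g"
    and j: "\<not> (n \<le> fst (fst g) \<or> k \<le> snd (snd (fst g))) \<Longrightarrow> j = fst (fst g)"
  shows "p * Psi \<mu> (gstep n k a b x g (\<not> x j)) + (1-p) * Psi \<mu> (gstep n k a b x g (x j)) \<le> \<beta> * Psi \<mu> g"
proof -
  obtain i w d bad where g: "g = ((i,w,d),bad)" by (metis prod.exhaust)
  show ?thesis
  proof (cases "n \<le> i \<or> k \<le> d")
    case True
    then show ?thesis using g by (simp add: gstep_inact Psi_def)
  next
    case act: False
    then have ji: "j = i" using j g by simp
    define R where "R = dst i w - dst i 0 + Hp i d"
    have d1: "dst i (w + sgn1 (\<not> x i)) = dst i w + 1" "dst i (w + sgn1 (x i)) = dst i w - 1"
      by (auto simp: dst_def sgn1_def)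
    have A1: "Psi \<mu> (gstep n k a b x g (\<not> x j)) \<le> exp (\<mu> * (R + 1))"
    proof -
      have "Psi \<mu> (gstep n k a b x g (\<not> x j)) \<le> exp (\<mu> * (dst i (w + sgn1 (\<not> x i)) - dst i 0 + Hp i d))"
        unfolding g ji by (rule Psi_stepA[OF inv[unfolded g] act mu])
      also have "\<dots> = exp (\<mu> * (R + 1))" unfolding d1 R_def by (simp add: algebra_simps)
      finally show ?thesis .
    qed
    have A2: "Psi \<mu> (gstep n k a b x g (x j)) \<le> exp (\<mu> * (R - 1))"
    proof -
      have "Psi \<mu> (gstep n k a b x g (x j)) \<le> exp (\<mu> * (dst i (w + sgn1 (x i)) - dst i 0 + Hp i d))"
        unfolding g ji by (rule Psi_stepA[OF inv[unfolded g] act mu])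
      also have "\<dots> = exp (\<mu> * (R - 1))" unfolding d1 R_def by (simp add: algebra_simps)
      finally show ?thesis .
    qed
    have "p * Psi \<mu> (gstep n k a b x g (\<not> x j)) + (1-p) * Psi \<mu> (gstep n k a b x g (x j))
        \<le> p * exp (\<mu> * (R + 1)) + (1-p) * exp (\<mu> * (R - 1))"
      using A1 A2 p by (intro add_mono mult_left_mono) auto
    also have "\<dots> = exp (\<mu> * R) * (p * exp \<mu> + (1-p) * exp (-\<mu>))"
      by (simp add: algebra_simps flip: exp_add)
    also have "\<dots> \<le> exp (\<mu> * R) * \<beta>" using beta by (intro mult_left_mono) auto
    also have "\<dots> = \<beta> * Psi \<mu> g" using g act by (simp add: Psi_def R_def)
    finally show ?thesis .
  qed
qed

lemma Psi_ge1: "Inv n k a b x ((i,w,d),bad) \<Longrightarrow> \<not> (n \<le> i \<or> k \<le> d) \<Longrightarrow> 0 \<le> \<mu> \<Longrightarrow> 1 \<le> Psi \<mu> ((i,w,d),bad)"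
proof -
  assume inv: "Inv n k a b x ((i,w,d),bad)" and act: "\<not> (n \<le> i \<or> k \<le> d)" and mu: "0 \<le> \<mu>"
  have i: "i < n" "d < k" using act by auto
  have "0 \<le> dst i w" using inv by (auto simp: Inv_def dst_def)
  moreover have "dst i 0 \<le> Hp i d"
  proof (cases "x i")
    case True then show ?thesis using Hp_one[OF i(1) True i(2)] Hp_nonneg[of "Suc i" "Suc d"] by (simp add: dst_def)
  next
    case False then show ?thesis using Hp_zero[OF i(1) False, of d] Hp_nonneg[of "Suc i" d] by (simp add: dst_def)
  qed
  ultimately have "0 \<le> \<mu> * (dst i w - dst i 0 + Hp i d)" using mu by simp
  then show ?thesis using act by (simp add: Psi_def)
qed

lemma Psi_nonneg: "0 \<le> Psi \<mu> g" by (auto simp: Psi_def split: prod.splits)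

lemma Psi_init: "1 \<le> n \<Longrightarrow> 1 \<le> k \<Longrightarrow> Psi \<mu> ((0,0,0),False) = exp (\<mu> * Hp 0 0)"
  by (simp add: Psi_def)

lemma Phi1_init: "1 \<le> n \<Longrightarrow> 1 \<le> k \<Longrightarrow> Phi1 ((0,0,0),False) = Fp 0 0"
  by (simp add: Phi1_def)

lemma F00: "Fp 0 0 \<le> exp (-c*b) * n + exp (-c*a) * k"
proof -
  have "real (Zc n x 0) \<le> n" using Zc_le by simp
  moreover have "real (min (Oc n x 0) k) \<le> k" by simp
  ultimately show ?thesis unfolding Fp_def by (intro add_mono mult_left_mono) auto
qed

lemma H00: "Hp 0 0 \<le> real a * n + real b * k"
proof -
  have "real (Zc n x 0) \<le> n" using Zc_le by simp
  moreover have "real (min (Oc n x 0) k) \<le> k" by simp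
  ultimately show ?thesis unfolding Hp_def by (intro add_mono mult_left_mono) auto
qed

end

lemma prob_resp:
  assumes "0 \<le> p" "p \<le> 1"
  shows "measure_pmf.prob (responses p q x t) S = Ee p q x t (indicator S)"
proof -
  have "measure_pmf.prob (responses p q x t) S = (\<integral>hs. indicator S hs \<partial>measure_pmf (responses p q x t))"
    by simp
  also have "\<dots> = Ee p q x t (indicator S)" by (rule int_resp[OF assms])
  finally show ?thesis .
qed

lemma aq_less: "1 \<le> n \<Longrightarrow> aq n k a b hs < n"
  by (auto simp: aq_def split: prod.splits)

lemma aq_gst: "\<not> (n \<le> fst (fst (gst n k a b x hs)) \<or> k \<le> snd (snd (fst (gst n k a b x hs)))) \<Longrightarrow>
   aq n k a b hs = fst (fst (gst n k a b x hs))"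
  by (auto simp: aq_def fst_gst split: prod.splits)

lemma ub_err:
  assumes n: "1 \<le> n" and k: "1 \<le> k" and a: "1 \<le> a" and b: "1 \<le> b"
    and p: "0 < p" "p < 1/2" and mu: "0 \<le> \<mu>"
  defines "c \<equiv> ln ((1-p)/p)"
  defines "\<beta> \<equiv> p * exp \<mu> + (1-p) * exp (-\<mu>)"
  shows "err_prob p n k (return_pmf (aq n k a b, aout n k a b)) T x
     \<le> exp (-c*b) * n + exp (-c*a) * k + \<beta>^T * exp (\<mu> * (real a * n + real b * k))"
proof -
  have p1: "p < 1" using p by simp
  have c0: "0 < c" unfolding c_def using p by (simp add: field_simps)
  have ec: "exp c = (1-p)/p" unfolding c_def using p by simp
  interpret U: UB n k a b x c by unfold_locales (use a b c0 in auto)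
  let ?q = "aq n k a b" and ?g = "gst n k a b x"
  have "err_prob p n k (return_pmf (aq n k a b, aout n k a b)) T x
      = measure_pmf.prob (responses p ?q x T) {hs. aout n k a b hs \<noteq> TH n k x}"
    by (simp add: err_prob_def output_dist_def bind_return_pmf vimage_def)
  also have "\<dots> = Ee p ?q x T (indicator {hs. aout n k a b hs \<noteq> TH n k x})"
    by (rule prob_resp) (use p in auto)
  also have "\<dots> \<le> Ee p ?q x T (\<lambda>hs. U.Phi1 (?g hs) + U.Psi \<mu> (?g hs))"
  proof (rule Ee_mono)
    fix hs
    obtain i w d bad where g: "?g hs = ((i,w,d),bad)" by (metis prod.exhaust)
    have inv: "Inv n k a b x ((i,w,d),bad)" using Inv_gst[OF a b, of n k x hs] g by simp
    have ast: "ast n k a b hs = (i,w,d)" using fst_gst[of n k a b x hs] g by simp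
    show "indicator {hs. aout n k a b hs \<noteq> TH n k x} hs \<le> U.Phi1 (?g hs) + U.Psi \<mu> (?g hs)"
    proof (cases "bad")
      case True
      then show ?thesis using g U.Psi_nonneg[of \<mu> "?g hs"] by (simp add: U.Phi1_def indicator_def)
    next
      case False
      show ?thesis
      proof (cases "n \<le> i \<or> k \<le> d")
        case True
        then have "aout n k a b hs = TH n k x" using aout_correct[of n k a b x i w d] inv False ast
          by (simp add: aout_def)
        then show ?thesis using U.Phi1_nonneg[of "?g hs"] U.Psi_nonneg[of \<mu> "?g hs"] by simp
      next
        case act: False
        have "1 \<le> U.Psi \<mu> (?g hs)" using U.Psi_ge1[OF inv act mu] g by simp
        then show ?thesis using U.Phi1_nonneg[of "?g hs"] by (simp add: indicator_def)
      qed
    qed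
  qed (use p in auto)
  also have "\<dots> = Ee p ?q x T (\<lambda>hs. U.Phi1 (?g hs)) + Ee p ?q x T (\<lambda>hs. U.Psi \<mu> (?g hs))"
    by (rule Ee_add)
  also have "Ee p ?q x T (\<lambda>hs. U.Phi1 (?g hs)) \<le> 1^T * U.Phi1 (?g [])"
  proof (rule Ee_super)
    fix hs
    show "p * U.Phi1 (?g (hs @ [\<not> x (?q hs)])) + (1 - p) * U.Phi1 (?g (hs @ [x (?q hs)])) \<le> 1 * U.Phi1 (?g hs)"
      unfolding gst_snoc using U.Phi1_super[OF p(1) p1 ec Inv_gst[OF a b] aq_gst] by simp
  qed (use p in auto)
  also have "Ee p ?q x T (\<lambda>hs. U.Psi \<mu> (?g hs)) \<le> \<beta>^T * U.Psi \<mu> (?g [])"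
  proof (rule Ee_super)
    fix hs
    show "p * U.Psi \<mu> (?g (hs @ [\<not> x (?q hs)])) + (1 - p) * U.Psi \<mu> (?g (hs @ [x (?q hs)])) \<le> \<beta> * U.Psi \<mu> (?g hs)"
      unfolding gst_snoc using U.Psi_super[OF p(1) p1 mu _ Inv_gst[OF a b] aq_gst] by (simp add: \<beta>_def)
  qed (use p in \<open>auto simp: \<beta>_def\<close>)
  also have "U.Phi1 (?g []) = U.Fp 0 0" using U.Phi1_init n k by (simp add: gst_def)
  also have "U.Psi \<mu> (?g []) = exp (\<mu> * U.Hp 0 0)" using U.Psi_init n k by (simp add: gst_def)
  finally have "err_prob p n k (return_pmf (aq n k a b, aout n k a b)) T x \<le> U.Fp 0 0 + \<beta>^T * exp (\<mu> * U.Hp 0 0)"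
    by simp
  also have "\<dots> \<le> exp (-c*b) * n + exp (-c*a) * k + \<beta>^T * exp (\<mu> * (real a * n + real b * k))"
  proof (intro add_mono U.F00 mult_left_mono)
    show "exp (\<mu> * U.Hp 0 0) \<le> exp (\<mu> * (real a * real n + real b * real k))"
      using U.H00 mu by (simp add: mult_left_mono)
    show "0 \<le> \<beta>^T" unfolding \<beta>_def using p by (intro zero_le_power add_nonneg_nonneg) auto
  qed
  finally show ?thesis .
qed

definition Vq :: "nat \<Rightarrow> (bool list \<Rightarrow> nat) \<Rightarrow> bool list \<Rightarrow> real" where
  "Vq i q hs = (\<Sum>j<length hs. if q (take j hs) = i then (if hs!j then -1 else 1) else 0)"

definition Nq :: "nat \<Rightarrow> (bool list \<Rightarrow> nat) \<Rightarrow> bool list \<Rightarrow> real" where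
  "Nq i q hs = (\<Sum>j<length hs. if q (take j hs) = i then 1 else 0)"

lemma Vq_snoc: "Vq i q (hs@[h]) = Vq i q hs + (if q hs = i then (if h then -1 else 1) else 0)"
proof -
  have "Vq i q (hs@[h]) = (\<Sum>j<Suc (length hs). if q (take j (hs@[h])) = i then (if (hs@[h])!j then -1 else 1) else 0)"
    by (simp add: Vq_def)
  also have "\<dots> = (\<Sum>j<length hs. if q (take j (hs@[h])) = i then (if (hs@[h])!j then -1 else 1) else 0)
      + (if q hs = i then (if h then -1 else 1) else 0)"
    by (simp add: sum.lessThan_Suc)
  also have "(\<Sum>j<length hs. if q (take j (hs@[h])) = i then (if (hs@[h])!j then -1 else 1) else 0) = Vq i q hs"
    unfolding Vq_def by (intro sum.cong) (auto simp: nth_append)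
  finally show ?thesis .
qed

lemma Nq_snoc: "Nq i q (hs@[h]) = Nq i q hs + (if q hs = i then 1 else 0)"
proof -
  have "Nq i q (hs@[h]) = (\<Sum>j<Suc (length hs). if q (take j (hs@[h])) = i then 1 else 0)"
    by (simp add: Nq_def)
  also have "\<dots> = (\<Sum>j<length hs. if q (take j (hs@[h])) = i then 1 else 0) + (if q hs = i then 1 else 0)"
    by (simp add: sum.lessThan_Suc)
  also have "(\<Sum>j<length hs. if q (take j (hs@[h])) = i then 1 else 0) = Nq i q hs"
    unfolding Nq_def by (intro sum.cong) (auto simp: nth_append)
  finally show ?thesis by simp
qed

lemma Nq_Nil[simp]: "Nq i q [] = 0" and Vq_Nil[simp]: "Vq i q [] = 0"
  by (simp_all add: Nq_def Vq_def)

lemma Nq_nonneg: "0 \<le> Nq i q hs" by (simp add: Nq_def sum_nonneg)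

lemma Nq_le: "Nq i q hs \<le> length hs"
proof -
  have "Nq i q hs \<le> (\<Sum>j<length hs. 1)" unfolding Nq_def by (intro sum_mono) auto
  then show ?thesis by simp
qed

lemma Vq_abs_le: "\<bar>Vq i q hs\<bar> \<le> length hs"
proof -
  have "\<bar>Vq i q hs\<bar> \<le> (\<Sum>j<length hs. \<bar>if q (take j hs) = i then (if hs!j then -1 else 1) else 0\<bar>)"
    unfolding Vq_def by (rule sum_abs)
  also have "\<dots> \<le> (\<Sum>j<length hs. (1::real))" by (intro sum_mono) auto
  finally show ?thesis by simp
qed

lemma sum_N:
  assumes "\<And>hs. q hs < n"
  shows "(\<Sum>i<n. Nq i q hs) = length hs"
proof -
  have "(\<Sum>i<n. Nq i q hs) = (\<Sum>j<length hs. \<Sum>i<n. if q (take j hs) = i then 1 else 0)"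
    unfolding Nq_def by (rule sum.swap)
  also have "\<dots> = (\<Sum>j<length hs. (1::real))"
    using assms by (intro sum.cong refl) (simp add: sum.delta)
  finally show ?thesis by simp
qed

lemma prb_flip:
  assumes p: "0 < p" "p < 1" and xi: "x i"
  shows "prb p (x(i:=False)) q hs = prb p x q hs * exp (ln ((1-p)/p) * Vq i q hs)"
proof (induction hs rule: rev_induct)
  case Nil then show ?case by simp
next
  case (snoc h hs)
  have e1: "exp (ln ((1-p)/p)) = (1-p)/p" using p by simp
  have e2: "exp (- ln ((1-p)/p)) = p/(1-p)" using p by (simp add: exp_minus)
  have fac: "(if h = (x(i:=False)) (q hs) then 1-p else p) =
     (if h = x (q hs) then 1-p else p) * exp (ln ((1-p)/p) * (if q hs = i then (if h then -1 else 1) else 0))"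
    using p xi e1 e2 by (auto simp: field_simps)
  define cc where "cc = ln ((1-p)/p)"
  have "prb p (x(i:=False)) q (hs@[h]) = prb p (x(i:=False)) q hs * (if h = (x(i:=False)) (q hs) then 1-p else p)"
    by (rule prb_snoc)
  also have "\<dots> = (prb p x q hs * (if h = x (q hs) then 1-p else p)) * (exp (cc * Vq i q hs) *
       exp (cc * (if q hs = i then (if h then -1 else 1) else 0)))"
    unfolding snoc fac cc_def by (simp add: algebra_simps)
  also have "\<dots> = prb p x q (hs@[h]) * exp (cc * Vq i q (hs@[h]))"
    by (simp add: prb_snoc Vq_snoc distrib_left exp_add)
  finally show ?case unfolding cc_def .
qed

lemma Ee_flip:
  assumes p: "0 < p" "p < 1" and xi: "x i"
  shows "Ee p q (x(i:=False)) t f = Ee p q x t (\<lambda>hs. f hs * exp (ln ((1-p)/p) * Vq i q hs))"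
  unfolding Ee_def by (intro sum.cong refl) (simp add: prb_flip[where x=x and i=i, OF p xi] algebra_simps)

lemma Ee_mart:
  assumes p: "0 \<le> p" "p \<le> 1" and xi: "\<not> x i"
  shows "Ee p q x t (\<lambda>hs. (Vq i q hs - (1-2*p) * Nq i q hs)^2) = 4*p*(1-p) * Ee p q x t (Nq i q)"
proof (induction t)
  case 0 then show ?case by simp
next
  case (Suc t)
  have "Ee p q x (Suc t) (\<lambda>hs. (Vq i q hs - (1-2*p) * Nq i q hs)^2)
     = Ee p q x t (\<lambda>hs. (Vq i q hs - (1-2*p) * Nq i q hs)^2 + 4*p*(1-p) * (if q hs = i then 1 else 0))"
    unfolding Ee_Suc
  proof (intro arg_cong[where f="Ee p q x t"] ext)
    fix hs
    show "p * (Vq i q (hs @ [\<not> x (q hs)]) - (1 - 2 * p) * Nq i q (hs @ [\<not> x (q hs)]))\<^sup>2 +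
         (1 - p) * (Vq i q (hs @ [x (q hs)]) - (1 - 2 * p) * Nq i q (hs @ [x (q hs)]))\<^sup>2 =
         (Vq i q hs - (1 - 2 * p) * Nq i q hs)\<^sup>2 + 4 * p * (1 - p) * (if q hs = i then 1 else 0)"
      using xi by (cases "q hs = i") (auto simp: Vq_snoc Nq_snoc power2_eq_square algebra_simps)
  qed
  also have "\<dots> = Ee p q x t (\<lambda>hs. (Vq i q hs - (1-2*p) * Nq i q hs)^2) + 4*p*(1-p) * Ee p q x t (\<lambda>hs. if q hs = i then 1 else 0)"
    by (simp add: Ee_add Ee_cmult)
  also have "Ee p q x (Suc t) (Nq i q) = Ee p q x t (Nq i q) + Ee p q x t (\<lambda>hs. if q hs = i then 1 else 0)"
    unfolding Ee_Suc by (simp add: Nq_snoc algebra_simps Ee_add[symmetric] Ee_cmult[symmetric])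
  ultimately show ?case using Suc by (simp add: algebra_simps)
qed

lemma Ee_cong: "(\<And>hs. length hs = t \<Longrightarrow> f hs = g hs) \<Longrightarrow> Ee p q x t f = Ee p q x t g"
  unfolding Ee_def by (intro sum.cong) (auto simp: LL_def)

lemma Ee_mono': "0 \<le> p \<Longrightarrow> p \<le> 1 \<Longrightarrow> (\<And>hs. length hs = t \<Longrightarrow> f hs \<le> g hs) \<Longrightarrow> Ee p q x t f \<le> Ee p q x t g"
  unfolding Ee_def by (intro sum_mono mult_left_mono) (auto simp: prb_nonneg LL_def)

lemma Ee_abs:
  assumes "0 \<le> p" "p \<le> 1" "\<And>hs. length hs = t \<Longrightarrow> \<bar>f hs\<bar> \<le> B"
  shows "\<bar>Ee p q x t f\<bar> \<le> B"
proof -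
  have "Ee p q x t f \<le> Ee p q x t (\<lambda>_. B)" using assms by (intro Ee_mono') (auto simp: abs_le_iff)
  moreover have "-B \<le> f hs" if "length hs = t" for hs using abs_le_D2[OF assms(3)[OF that]] by linarith
  then have "Ee p q x t (\<lambda>_. -B) \<le> Ee p q x t f" using assms by (intro Ee_mono') auto
  ultimately show ?thesis by (simp add: Ee_const)
qed

definition EA :: "real \<Rightarrow> strategy pmf \<Rightarrow> (nat \<Rightarrow> bool) \<Rightarrow> nat \<Rightarrow> (strategy \<Rightarrow> bool list \<Rightarrow> real) \<Rightarrow> real" where
  "EA p A x T f = (\<integral>s. Ee p (fst s) x T (f s) \<partial>measure_pmf A)"

definition bnd :: "nat \<Rightarrow> (strategy \<Rightarrow> bool list \<Rightarrow> real) \<Rightarrow> bool" where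
  "bnd T f \<longleftrightarrow> (\<exists>B. \<forall>s hs. length hs = T \<longrightarrow> \<bar>f s hs\<bar> \<le> B)"

lemma EA_integrable:
  assumes "0 \<le> p" "p \<le> 1" "bnd T f"
  shows "integrable (measure_pmf A) (\<lambda>s. Ee p (fst s) x T (f s))"
proof -
  obtain B where B: "\<And>s hs. length hs = T \<Longrightarrow> \<bar>f s hs\<bar> \<le> B" using assms(3) by (auto simp: bnd_def)
  show ?thesis
    by (rule measure_pmf.integrable_const_bound[where B=B]) (use Ee_abs[OF assms(1,2) B] in auto)
qed

lemma bnd_add: "bnd T f \<Longrightarrow> bnd T g \<Longrightarrow> bnd T (\<lambda>s hs. f s hs + g s hs)"
proof -
  assume "bnd T f" "bnd T g"
  then obtain B1 B2 where b1: "\<And>s hs. length hs = T \<Longrightarrow> \<bar>f s hs\<bar> \<le> B1" and b2: "\<And>s hs. length hs = T \<Longrightarrow> \<bar>g s hs\<bar> \<le> B2"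
    by (auto simp: bnd_def)
  have "\<bar>f s hs + g s hs\<bar> \<le> B1 + B2" if "length hs = T" for s hs
    using abs_triangle_ineq[of "f s hs" "g s hs"] b1[OF that, of s] b2[OF that, of s] by linarith
  then show ?thesis unfolding bnd_def by blast
qed

lemma bnd_mult: "bnd T f \<Longrightarrow> bnd T g \<Longrightarrow> bnd T (\<lambda>s hs. f s hs * g s hs)"
proof -
  assume "bnd T f" "bnd T g"
  then obtain B1 B2 where b1: "\<And>s hs. length hs = T \<Longrightarrow> \<bar>f s hs\<bar> \<le> B1" and b2: "\<And>s hs. length hs = T \<Longrightarrow> \<bar>g s hs\<bar> \<le> B2"
    by (auto simp: bnd_def)
  have "\<bar>f s hs * g s hs\<bar> \<le> B1 * B2" if "length hs = T" for s hs
  proof -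
    have "0 \<le> B1" using b1[OF that, of s] abs_ge_zero[of "f s hs"] by linarith
    then show ?thesis unfolding abs_mult by (rule mult_mono[OF b1[OF that] b2[OF that]]) simp
  qed
  then show ?thesis unfolding bnd_def by blast
qed

lemma bnd_const[simp]: "bnd T (\<lambda>s hs. c)"
  unfolding bnd_def by auto

lemma bnd_indicator[simp]: "bnd T (\<lambda>s hs. indicator (S s) hs)"
  unfolding bnd_def by (intro exI[of _ 1]) (auto simp: indicator_def)

lemma bnd_N[simp]: "bnd T (\<lambda>s hs. Nq i (fst s) hs)"
  unfolding bnd_def by (intro exI[of _ "real T"]) (use Nq_le Nq_nonneg in fastforce)

lemma bnd_V[simp]: "bnd T (\<lambda>s hs. Vq i (fst s) hs)"
  unfolding bnd_def by (intro exI[of _ "real T"]) (use Vq_abs_le in fastforce)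

lemma bnd_exp_V[simp]: "bnd T (\<lambda>s hs. exp (c * Vq i (fst s) hs))"
  unfolding bnd_def
proof (intro exI[of _ "exp (\<bar>c\<bar> * T)"] allI impI)
  fix s and hs :: "bool list" assume "length hs = T"
  have "c * Vq i (fst s) hs \<le> \<bar>c\<bar> * T"
  proof -
    have "c * Vq i (fst s) hs \<le> \<bar>c * Vq i (fst s) hs\<bar>" by simp
    also have "\<dots> \<le> \<bar>c\<bar> * T" unfolding abs_mult using Vq_abs_le[of i "fst s" hs] \<open>length hs = T\<close>
      by (intro mult_left_mono) auto
    finally show ?thesis .
  qed
  then show "\<bar>exp (c * Vq i (fst s) hs)\<bar> \<le> exp (\<bar>c\<bar> * T)" by simp
qed

lemma bnd_pow2: "bnd T f \<Longrightarrow> bnd T (\<lambda>s hs. (f s hs)^2)"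
  unfolding power2_eq_square by (rule bnd_mult)

lemma bnd_sum: "finite I \<Longrightarrow> (\<And>i. i \<in> I \<Longrightarrow> bnd T (f i)) \<Longrightarrow> bnd T (\<lambda>s hs. \<Sum>i\<in>I. f i s hs)"
  by (induction I rule: finite_induct) (auto intro: bnd_add)

lemma bnd_ind_mult: "bnd T f \<Longrightarrow> bnd T (\<lambda>s hs. f s hs * indicator (S s) hs)"
  by (rule bnd_mult) auto

lemma EA_add: "0 \<le> p \<Longrightarrow> p \<le> 1 \<Longrightarrow> bnd T f \<Longrightarrow> bnd T g \<Longrightarrow>
   EA p A x T (\<lambda>s hs. f s hs + g s hs) = EA p A x T f + EA p A x T g"
  unfolding EA_def Ee_add by (intro Bochner_Integration.integral_add EA_integrable)

lemma EA_cmult: "EA p A x T (\<lambda>s hs. c * f s hs) = c * EA p A x T f"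
  unfolding EA_def Ee_cmult by simp

lemma EA_const: "EA p A x T (\<lambda>s hs. c) = c"
  unfolding EA_def Ee_const by simp

lemma EA_mono: "0 \<le> p \<Longrightarrow> p \<le> 1 \<Longrightarrow> bnd T f \<Longrightarrow> bnd T g \<Longrightarrow>
   (\<And>s hs. length hs = T \<Longrightarrow> f s hs \<le> g s hs) \<Longrightarrow> EA p A x T f \<le> EA p A x T g"
  unfolding EA_def by (intro integral_mono EA_integrable Ee_mono') auto

lemma EA_sum: assumes "0 \<le> p" "p \<le> 1" "finite I" "\<And>i. i \<in> I \<Longrightarrow> bnd T (f i)" shows
   "EA p A x T (\<lambda>s hs. \<Sum>i\<in>I. f i s hs) = (\<Sum>i\<in>I. EA p A x T (f i))"
  using assms(3,4) proof (induction I rule: finite_induct)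
  case empty then show ?case by (simp add: EA_const)
next
  case (insert a I)
  then show ?case using assms(1,2) by (simp add: EA_add bnd_sum)
qed

lemma EA_flip:
  assumes p: "0 < p" "p < 1" and xi: "x i"
  shows "EA p A (x(i:=False)) T f = EA p A x T (\<lambda>s hs. f s hs * exp (ln ((1-p)/p) * Vq i (fst s) hs))"
  unfolding EA_def by (intro Bochner_Integration.integral_cong refl Ee_flip[where x=x and i=i, OF p xi])

lemma measure_bind_pmf:
  "measure_pmf.prob (bind_pmf A Fp) S = (\<integral>s. measure_pmf.prob (Fp s) S \<partial>measure_pmf A)"
proof -
  have int: "integrable (measure_pmf A) (\<lambda>s. measure_pmf.prob (Fp s) S)"
    by (rule measure_pmf.integrable_const_bound[where B=1]) auto
  have "ennreal (measure_pmf.prob (bind_pmf A Fp) S) = emeasure (measure_pmf (bind_pmf A Fp)) S"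
    by (simp add: measure_pmf.emeasure_eq_measure)
  also have "\<dots> = (\<integral>\<^sup>+s. emeasure (measure_pmf (Fp s)) S \<partial>measure_pmf A)" by simp
  also have "\<dots> = (\<integral>\<^sup>+s. ennreal (measure_pmf.prob (Fp s) S) \<partial>measure_pmf A)"
    by (simp add: measure_pmf.emeasure_eq_measure)
  also have "\<dots> = ennreal (\<integral>s. measure_pmf.prob (Fp s) S \<partial>measure_pmf A)"
    by (rule nn_integral_eq_integral[OF int]) auto
  finally show ?thesis by (simp add: integral_nonneg_AE)
qed

lemma err_EA:
  assumes "0 \<le> p" "p \<le> 1"
  shows "err_prob p n k A T x = EA p A x T (\<lambda>s hs. indicator {hs. snd s hs \<noteq> TH n k x} hs)"
  unfolding err_prob_def output_dist_def measure_bind_pmf EA_def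
  by (intro Bochner_Integration.integral_cong refl)
     (simp add: int_resp[OF assms, symmetric] vimage_def)

lemma bndI: "(\<And>s hs. \<bar>f s hs\<bar> \<le> B) \<Longrightarrow> bnd T f"
  unfolding bnd_def by blast

lemma bnd_if01[simp]: "bnd T (\<lambda>s hs. if P s hs then 1 else 0)"
  by (rule bndI[where B=1]) auto

lemma bnd_if10[simp]: "bnd T (\<lambda>s hs. if P s hs then 0 else 1)"
  by (rule bndI[where B=1]) auto

lemma bnd_cmult: "bnd T f \<Longrightarrow> bnd T (\<lambda>s hs. c * f s hs)"
  by (rule bnd_mult) auto

lemma bnd_diff: "bnd T f \<Longrightarrow> bnd T g \<Longrightarrow> bnd T (\<lambda>s hs. f s hs - c * g s hs)"
proof -
  assume "bnd T f" "bnd T g"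
  then have "bnd T (\<lambda>s hs. f s hs + (-c) * g s hs)" by (intro bnd_add bnd_cmult)
  then show ?thesis by simp
qed

lemma EA_cong: "(\<And>s hs. length hs = T \<Longrightarrow> f s hs = g s hs) \<Longrightarrow> EA p A x T f = EA p A x T g"
  unfolding EA_def by (intro Bochner_Integration.integral_cong refl Ee_cong) auto

lemma EA_mart:
  assumes p: "0 \<le> p" "p \<le> 1" and xi: "\<not> x i"
  shows "EA p A x T (\<lambda>s hs. (Vq i (fst s) hs - (1-2*p) * Nq i (fst s) hs)^2) = 4*p*(1-p) * EA p A x T (\<lambda>s. Nq i (fst s))"
  unfolding EA_def by (simp add: Ee_mart[where x=x and i=i, OF p xi])

lemma lb_tail:
  assumes p: "0 < p" "p < 1/2" and xi: "\<not> x i" and m: "0 < m" and al: "1 < \<alpha>"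
    and EN: "EA p A x T (\<lambda>s. Nq i (fst s)) \<le> m"
  defines "t \<equiv> (1-2*p) * \<alpha>^2 * m"
  shows "1 - 1/\<alpha> - 4*p*(1-p) / ((1-2*p)^2 * \<alpha>^2 * (\<alpha>-1)^2 * m) \<le> EA p A x T (\<lambda>s hs. if Vq i (fst s) hs \<le> t then 1 else 0)"
proof -
  have p01: "0 \<le> p" "p \<le> 1" using p by auto
  define sg where "sg = (1-2*p) * \<alpha> * (\<alpha>-1) * m"
  have sg: "0 < sg" unfolding sg_def using p m al by (intro mult_pos_pos) auto
  have am: "0 < \<alpha> * m" using al m by simp
  have pw: "(if Vq i (fst s) hs \<le> t then 0 else 1) \<le> Nq i (fst s) hs / (\<alpha>*m) + (Vq i (fst s) hs - (1-2*p) * Nq i (fst s) hs)^2 / sg^2"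
    for s hs
  proof (cases "Vq i (fst s) hs \<le> t")
    case True then show ?thesis using am sg Nq_nonneg[of i "fst s" hs] by (simp add: divide_nonneg_pos)
  next
    case False
    show ?thesis
    proof (cases "Nq i (fst s) hs \<le> \<alpha> * m")
      case True
      have "(1-2*p) * Nq i (fst s) hs \<le> (1-2*p) * (\<alpha> * m)" using True p by (intro mult_left_mono) auto
      then have "sg \<le> Vq i (fst s) hs - (1-2*p) * Nq i (fst s) hs" using False unfolding t_def sg_def
        by (simp add: power2_eq_square algebra_simps)
      then have "sg^2 \<le> (Vq i (fst s) hs - (1-2*p) * Nq i (fst s) hs)^2" using sg by (intro power_mono) auto
      then have "1 \<le> (Vq i (fst s) hs - (1-2*p) * Nq i (fst s) hs)^2 / sg^2" using sg by simp
      then show ?thesis using False am Nq_nonneg[of i "fst s" hs] by (simp add: add_increasing divide_nonneg_pos)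
    next
      case False
      then have "1 \<le> Nq i (fst s) hs / (\<alpha>*m)" using am by simp
      then show ?thesis using \<open>\<not> Vq i (fst s) hs \<le> t\<close> by (simp add: add_increasing2 divide_nonneg_pos)
    qed
  qed
  have "EA p A x T (\<lambda>s hs. if Vq i (fst s) hs \<le> t then 0 else 1)
      \<le> EA p A x T (\<lambda>s hs. Nq i (fst s) hs / (\<alpha>*m) + (Vq i (fst s) hs - (1-2*p) * Nq i (fst s) hs)^2 / sg^2)"
  proof (rule EA_mono[OF p01])
    show "bnd T (\<lambda>s hs. Nq i (fst s) hs / (\<alpha>*m) + (Vq i (fst s) hs - (1-2*p) * Nq i (fst s) hs)^2 / sg^2)"
      unfolding divide_inverse by (intro bnd_add bnd_mult bnd_pow2 bnd_diff bnd_N bnd_V bnd_const)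
  qed (simp_all add: pw)
  also have "\<dots> = EA p A x T (\<lambda>s hs. (1/(\<alpha>*m)) * Nq i (fst s) hs + (1/sg^2) * (Vq i (fst s) hs - (1-2*p) * Nq i (fst s) hs)^2)"
    by (intro EA_cong) simp
  also have "\<dots> = (1/(\<alpha>*m)) * EA p A x T (\<lambda>s. Nq i (fst s)) + (1/sg^2) * (4*p*(1-p) * EA p A x T (\<lambda>s. Nq i (fst s)))"
    by (subst EA_add[OF p01], (intro bnd_cmult bnd_pow2 bnd_diff bnd_N bnd_V)+, simp only: EA_cmult EA_mart[where x=x and i=i, OF p01 xi])
  also have "\<dots> \<le> (1/(\<alpha>*m)) * m + (1/sg^2) * (4*p*(1-p) * m)"
    using EN p am sg by (intro add_mono mult_left_mono) auto
  also have "\<dots> = 1/\<alpha> + 4*p*(1-p) / ((1-2*p)^2 * \<alpha>^2 * (\<alpha>-1)^2 * m)"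
  proof -
    define Q where "Q = (1-2*p)^2 * \<alpha>^2 * (\<alpha>-1)^2 * m"
    have Q: "0 < Q" unfolding Q_def using p al m by (intro mult_pos_pos) auto
    have "sg^2 = Q * m" unfolding sg_def Q_def by (simp add: power_mult_distrib power2_eq_square)
    then have "(1/sg^2) * (4*p*(1-p) * m) = 4*p*(1-p) / Q" using Q m by (simp add: field_simps)
    moreover have "(1/(\<alpha>*m)) * m = 1/\<alpha>" using m by simp
    ultimately show ?thesis unfolding Q_def by simp
  qed
  finally have up: "EA p A x T (\<lambda>s hs. if Vq i (fst s) hs \<le> t then 0 else 1) \<le> 1/\<alpha> + 4*p*(1-p) / ((1-2*p)^2 * \<alpha>^2 * (\<alpha>-1)^2 * m)" .
  have "EA p A x T (\<lambda>s hs. if Vq i (fst s) hs \<le> t then 1 else 0) = EA p A x T (\<lambda>s hs. 1 + (-1) * (if Vq i (fst s) hs \<le> t then 0 else 1))"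
    by (intro EA_cong) auto
  also have "\<dots> = 1 - EA p A x T (\<lambda>s hs. if Vq i (fst s) hs \<le> t then 0 else 1)"
    by (subst EA_add[OF p01], simp, intro bnd_cmult bnd_if10, simp only: EA_cmult EA_const)
  finally show ?thesis using up by linarith
qed

lemma EA_Lam1:
  assumes p: "0 < p" "p < 1" and xi: "x i"
  shows "EA p A x T (\<lambda>s hs. exp (ln ((1-p)/p) * Vq i (fst s) hs)) = 1"
proof -
  have "EA p A (x(i:=False)) T (\<lambda>s hs. 1) = EA p A x T (\<lambda>s hs. 1 * exp (ln ((1-p)/p) * Vq i (fst s) hs))"
    by (rule EA_flip[where x=x and i=i, OF p xi])
  then show ?thesis by (simp add: EA_const)
qed

lemma EA_Lam2:
  assumes p: "0 < p" "p < 1" and xi: "x i" and xj: "x j" and ij: "i \<noteq> j"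
  shows "EA p A x T (\<lambda>s hs. exp (ln ((1-p)/p) * Vq i (fst s) hs) * exp (ln ((1-p)/p) * Vq j (fst s) hs)) = 1"
proof -
  have xj': "(x(i:=False)) j" using xj ij by simp
  have "EA p A x T (\<lambda>s hs. exp (ln ((1-p)/p) * Vq i (fst s) hs) * exp (ln ((1-p)/p) * Vq j (fst s) hs))
     = EA p A (x(i:=False)) T (\<lambda>s hs. exp (ln ((1-p)/p) * Vq j (fst s) hs))"
    by (subst EA_flip[where x=x and i=i, OF p xi]) (simp add: mult.commute)
  also have "\<dots> = 1" by (rule EA_Lam1[where x="x(i:=False)" and i=j, OF p xj'])
  finally show ?thesis .
qed

lemma lb_core:
  fixes p m \<alpha> K \<delta> :: real
  assumes p: "0 < p" "p < 1/2" and m: "0 < m" and al: "1 < \<alpha>" and K: "0 < K"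
    and G: "finite G" "\<And>i. i \<in> G \<Longrightarrow> x i"
    and THx: "TH n k x" and THy: "\<And>i. i \<in> G \<Longrightarrow> \<not> TH n k (x(i:=False))"
    and errx: "err_prob p n k A T x \<le> \<delta>"
    and erry: "\<And>i. i \<in> G \<Longrightarrow> err_prob p n k A T (x(i:=False)) \<le> \<delta>"
    and EN: "\<And>i. i \<in> G \<Longrightarrow> EA p A (x(i:=False)) T (\<lambda>s. Nq i (fst s)) \<le> m"
  defines "t \<equiv> (1-2*p) * \<alpha>^2 * m"
    and "(\<rho>::real) \<equiv> 1 - 1/\<alpha> - 4*p*(1-p) / ((1-2*p)^2 * \<alpha>^2 * (\<alpha>-1)^2 * m)"
    and "c \<equiv> ln ((1-p)/p)"
  shows "card G * (\<rho> - \<delta>) \<le> K * \<delta> + (card G * exp (c*t) + (card G)^2) / (4*K)"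
proof -
  have p01: "0 \<le> p" "p \<le> 1" and p1: "0 < p" "p < 1" using p by auto
  have c0: "0 < c" unfolding c_def using p by (simp add: field_simps)
  define eE :: "strategy \<Rightarrow> bool list \<Rightarrow> real" where "eE s hs = (if snd s hs then 0 else 1)" for s hs
  define Lam :: "nat \<Rightarrow> strategy \<Rightarrow> bool list \<Rightarrow> real" where "Lam i s hs = exp (c * Vq i (fst s) hs)" for i s hs
  define Ind :: "nat \<Rightarrow> strategy \<Rightarrow> bool list \<Rightarrow> real" where "Ind i s hs = (if Vq i (fst s) hs \<le> t then 1 else 0)" for i s hs
  define Y where "Y i s hs = Lam i s hs * Ind i s hs" for i s hs
  have bE[simp]: "bnd T eE" unfolding eE_def by simp
  have bL[simp]: "bnd T (Lam i)" for i unfolding Lam_def by simp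
  have bI[simp]: "bnd T (Ind i)" for i unfolding Ind_def by simp
  have bY[simp]: "bnd T (Y i)" for i unfolding Y_def by (intro bnd_mult) simp_all
  have Lnn: "0 \<le> Lam i s hs" for i s hs by (simp add: Lam_def)
  have step1: "\<rho> - \<delta> \<le> EA p A x T (\<lambda>s hs. eE s hs * Y i s hs)" if iG: "i \<in> G" for i
  proof -
    have xi: "x i" using G(2) iG .
    have "EA p A x T (\<lambda>s hs. eE s hs * Y i s hs) = EA p A x T (\<lambda>s hs. (eE s hs * Ind i s hs) * exp (ln ((1-p)/p) * Vq i (fst s) hs))"
      by (intro EA_cong) (simp add: Y_def Lam_def c_def)
    also have "\<dots> = EA p A (x(i:=False)) T (\<lambda>s hs. eE s hs * Ind i s hs)"
      by (rule EA_flip[where x=x and i=i, OF p1 xi, symmetric])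
    also have "\<dots> \<ge> EA p A (x(i:=False)) T (\<lambda>s hs. Ind i s hs + (-1) * (1 - eE s hs))"
      by (rule EA_mono[OF p01]) (auto simp: eE_def Ind_def intro!: bnd_add bnd_cmult bnd_mult bnd_diff[where c=1, simplified])
    finally have a: "EA p A (x(i:=False)) T (\<lambda>s hs. Ind i s hs + (-1) * (1 - eE s hs)) \<le> EA p A x T (\<lambda>s hs. eE s hs * Y i s hs)" .
    have b: "EA p A (x(i:=False)) T (\<lambda>s hs. Ind i s hs + (-1) * (1 - eE s hs)) =
        EA p A (x(i:=False)) T (Ind i) - EA p A (x(i:=False)) T (\<lambda>s hs. 1 - eE s hs)"
      by (subst EA_add[OF p01], simp, intro bnd_cmult bnd_diff[where c=1, simplified], simp, simp, simp only: EA_cmult)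
    have "err_prob p n k A T (x(i:=False)) = EA p A (x(i:=False)) T (\<lambda>s hs. 1 - eE s hs)"
      unfolding err_EA[OF p01] using THy[OF iG] by (intro EA_cong) (simp add: eE_def)
    then have c1: "EA p A (x(i:=False)) T (\<lambda>s hs. 1 - eE s hs) \<le> \<delta>" using erry[OF iG] by simp
    have c2: "\<rho> \<le> EA p A (x(i:=False)) T (Ind i)"
      using lb_tail[OF p _ m al EN[OF iG]] unfolding \<rho>_def t_def Ind_def by simp
    show ?thesis using a b c1 c2 by linarith
  qed
  define SY where "SY s hs = (\<Sum>i\<in>G. Y i s hs)" for s hs
  have bSY[simp]: "bnd T SY" unfolding SY_def by (intro bnd_sum G) simp
  have "card G * (\<rho> - \<delta>) = (\<Sum>i\<in>G. \<rho> - \<delta>)" by simp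
  also have "\<dots> \<le> (\<Sum>i\<in>G. EA p A x T (\<lambda>s hs. eE s hs * Y i s hs))" by (intro sum_mono step1)
  also have "\<dots> = EA p A x T (\<lambda>s hs. eE s hs * SY s hs)"
    unfolding SY_def sum_distrib_left by (rule EA_sum[OF p01 G(1), symmetric]) (intro bnd_mult; simp)
  also have "\<dots> \<le> EA p A x T (\<lambda>s hs. K * eE s hs + (1/(4*K)) * (SY s hs)^2)"
  proof (rule EA_mono[OF p01])
    fix s hs
    have "eE s hs * SY s hs \<le> K * eE s hs + (1/(4*K)) * (SY s hs)^2"
    proof (cases "snd s hs")
      case True
      then show ?thesis using K by (simp add: eE_def)
    next
      case False
      have "0 \<le> (SY s hs - 2*K)^2 / (4*K)" using K by simp
      then have "SY s hs \<le> K + (1/(4*K)) * (SY s hs)^2" using K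
        by (simp add: power2_eq_square field_simps)
      then show ?thesis using False by (simp add: eE_def)
    qed
    then show "eE s hs * SY s hs \<le> K * eE s hs + (1/(4*K)) * (SY s hs)^2" .
  qed (intro bnd_mult bnd_add bnd_cmult bnd_pow2; simp)+
  also have "\<dots> = K * EA p A x T eE + (1/(4*K)) * EA p A x T (\<lambda>s hs. (SY s hs)^2)"
    by (subst EA_add[OF p01], (intro bnd_cmult bnd_pow2; simp)+, simp only: EA_cmult)
  finally have S2: "card G * (\<rho> - \<delta>) \<le> K * EA p A x T eE + (1/(4*K)) * EA p A x T (\<lambda>s hs. (SY s hs)^2)" .
  have E1: "EA p A x T eE = err_prob p n k A T x"
    unfolding err_EA[OF p01] using THx by (intro EA_cong) (simp add: eE_def)
  have E2: "EA p A x T (\<lambda>s hs. (SY s hs)^2) \<le> card G * exp (c*t) + (card G)^2"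
  proof -
    define g where "g i j s hs = (if i = j then exp (c*t) * Lam i s hs else Lam i s hs * Lam j s hs)" for i j s hs
    have bg: "bnd T (g i j)" for i j unfolding g_def
      by (cases "i = j") (simp_all add: bnd_cmult bnd_mult)
    have "EA p A x T (\<lambda>s hs. (SY s hs)^2) \<le> EA p A x T (\<lambda>s hs. \<Sum>i\<in>G. \<Sum>j\<in>G. g i j s hs)"
    proof (rule EA_mono[OF p01])
      fix s hs
      have "(SY s hs)^2 = (\<Sum>i\<in>G. \<Sum>j\<in>G. Y i s hs * Y j s hs)"
        unfolding SY_def power2_eq_square sum_product ..
      also have "\<dots> \<le> (\<Sum>i\<in>G. \<Sum>j\<in>G. g i j s hs)"
      proof (intro sum_mono)
        fix i j
        show "Y i s hs * Y j s hs \<le> g i j s hs"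
        proof (cases "i = j")
          case True
          have "Lam i s hs * Ind i s hs \<le> exp (c*t)"
            unfolding Lam_def Ind_def using c0 by (auto simp: mult_left_mono)
          then have "(Lam i s hs * Ind i s hs) * (Lam i s hs * Ind i s hs) \<le> exp (c*t) * Lam i s hs"
            using Lnn[of i s hs] by (auto simp: Ind_def mult_right_mono)
          then show ?thesis using True by (simp add: Y_def g_def)
        next
          case False
          have "Ind i s hs * Ind j s hs \<le> 1" by (simp add: Ind_def)
          then have "(Lam i s hs * Lam j s hs) * (Ind i s hs * Ind j s hs) \<le> (Lam i s hs * Lam j s hs) * 1"
            using Lnn[of i s hs] Lnn[of j s hs] by (intro mult_left_mono) auto
          then show ?thesis using False by (simp add: Y_def g_def algebra_simps)
        qed
      qed
      finally show "(SY s hs)^2 \<le> (\<Sum>i\<in>G. \<Sum>j\<in>G. g i j s hs)" .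
    qed (simp_all add: bnd_pow2 bnd_sum G bg)
    also have "\<dots> = (\<Sum>i\<in>G. \<Sum>j\<in>G. EA p A x T (g i j))"
      by (simp add: EA_sum[OF p01 G(1)] bnd_sum G bg)
    also have "\<dots> = (\<Sum>i\<in>G. \<Sum>j\<in>G. if i = j then exp (c*t) else 1)"
    proof (intro sum.cong refl)
      fix i j assume i: "i \<in> G" and j: "j \<in> G"
      show "EA p A x T (g i j) = (if i = j then exp (c*t) else 1)"
      proof (cases "i = j")
        case True
        have "g i j = (\<lambda>s hs. exp (c*t) * Lam i s hs)" using True by (intro ext) (simp add: g_def)
        then show ?thesis using EA_Lam1[where x=x and i=i, OF p1 G(2)[OF i]] True
          by (simp add: EA_cmult Lam_def c_def)
      next
        case False
        have "g i j = (\<lambda>s hs. Lam i s hs * Lam j s hs)" using False by (intro ext) (simp add: g_def)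
        then show ?thesis using EA_Lam2[where x=x and i=i and j=j, OF p1 G(2)[OF i] G(2)[OF j] False] False
          by (simp add: Lam_def c_def)
      qed
    qed
    also have "\<dots> \<le> (\<Sum>i\<in>G. exp (c*t) + card G)"
    proof (intro sum_mono)
      fix i assume i: "i \<in> G"
      have "(\<Sum>j\<in>G. if i = j then exp (c*t) else 1) = (\<Sum>j\<in>G. (if i = j then exp (c*t) else 0) + (if i = j then 0 else 1))"
        by (intro sum.cong) auto
      also have "\<dots> = exp (c*t) + (\<Sum>j\<in>G. if i = j then 0 else (1::real))"
        using i G(1) by (simp add: sum.distrib)
      also have "(\<Sum>j\<in>G. if i = j then 0 else (1::real)) \<le> (\<Sum>j\<in>G. 1)" by (intro sum_mono) auto
      finally show "(\<Sum>j\<in>G. if i = j then exp (c*t) else 1) \<le> exp (c*t) + card G" by simp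
    qed
    also have "\<dots> = card G * exp (c*t) + (card G)^2" by (simp add: power2_eq_square algebra_simps)
    finally show ?thesis .
  qed
  have "K * EA p A x T eE \<le> K * \<delta>" using E1 errx K by simp
  moreover have "(1/(4*K)) * EA p A x T (\<lambda>s hs. (SY s hs)^2) \<le> (1/(4*K)) * (card G * exp (c*t) + (card G)^2)"
    using E2 K by (intro mult_left_mono) auto
  ultimately show ?thesis using S2 by simp
qed

definition xS :: "nat set \<Rightarrow> nat \<Rightarrow> bool" where "xS S = (\<lambda>i. i \<in> S)"

definition Ks :: "nat \<Rightarrow> nat \<Rightarrow> nat set set" where "Ks n j = {S. S \<subseteq> {..<n} \<and> card S = j}"

lemma finite_Ks[simp]: "finite (Ks n j)"
proof -
  have "Ks n j \<subseteq> Pow {..<n}" by (auto simp: Ks_def)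
  then show ?thesis by (rule finite_subset) simp
qed

lemma xS_upd: "(xS S)(i:=False) = xS (S - {i})"
  by (rule ext) (auto simp: xS_def)

lemma EA_sumN:
  assumes "valid_alg n A"
  shows "EA p A x T (\<lambda>s hs. \<Sum>i<n. Nq i (fst s) hs) = T"
proof -
  have "EA p A x T (\<lambda>s hs. \<Sum>i<n. Nq i (fst s) hs) = (\<integral>s. real T \<partial>measure_pmf A)"
    unfolding EA_def
  proof (intro integral_cong_AE)
    show "AE s in measure_pmf A. Ee p (fst s) x T (\<lambda>hs. \<Sum>i<n. Nq i (fst s) hs) = real T"
    proof (subst AE_measure_pmf_iff, intro ballI)
      fix s assume "s \<in> set_pmf A"
      then have "\<And>hs. fst s hs < n" using assms by (auto simp: valid_alg_def)
      then have "Ee p (fst s) x T (\<lambda>hs. \<Sum>i<n. Nq i (fst s) hs) = Ee p (fst s) x T (\<lambda>hs. real T)"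
        by (intro Ee_cong) (simp add: sum_N)
      then show "Ee p (fst s) x T (\<lambda>hs. \<Sum>i<n. Nq i (fst s) hs) = real T" by (simp add: Ee_const)
    qed
  qed auto
  then show ?thesis by simp
qed

lemma sumEN_le:
  assumes "valid_alg n A" "0 \<le> p" "p \<le> 1" "I \<subseteq> {..<n}"
  shows "(\<Sum>i\<in>I. EA p A x T (\<lambda>s. Nq i (fst s))) \<le> T"
proof -
  have fI: "finite I" using assms(4) finite_subset by blast
  have "(\<Sum>i\<in>I. EA p A x T (\<lambda>s. Nq i (fst s))) = EA p A x T (\<lambda>s hs. \<Sum>i\<in>I. Nq i (fst s) hs)"
    by (rule EA_sum[OF assms(2,3) fI, symmetric]) simp
  also have "\<dots> \<le> EA p A x T (\<lambda>s hs. \<Sum>i<n. Nq i (fst s) hs)"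
    by (rule EA_mono[OF assms(2,3)]) (use fI in \<open>auto intro!: bnd_sum sum_mono2 assms(4) Nq_nonneg\<close>)
  also have "\<dots> = T" by (rule EA_sumN[OF assms(1)])
  finally show ?thesis .
qed

lemma EA_N_nonneg: "0 \<le> p \<Longrightarrow> p \<le> 1 \<Longrightarrow> 0 \<le> EA p A x T (\<lambda>s. Nq i (fst s))"
  unfolding EA_def by (intro integral_nonneg_AE AE_I2) (simp add: Ee_def sum_nonneg prb_nonneg Nq_nonneg)

lemma exists_good:
  assumes valid: "valid_alg n A" and k: "1 \<le> k" "k \<le> n" and m: "0 < m" and al: "1 < \<alpha>"
    and mT: "\<alpha> * T \<le> m * (n - k + 1)" and p: "0 \<le> p" "p \<le> 1"
  shows "\<exists>S. S \<subseteq> {..<n} \<and> card S = k \<and>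
     k * (1 - 1/\<alpha>) \<le> card {i\<in>S. EA p A (xS (S-{i})) T (\<lambda>s. Nq i (fst s)) \<le> m}"
proof -
  define e where "e S i = EA p A (xS (S-{i})) T (\<lambda>s. Nq i (fst s))" for S i
  define P where "P = Sigma (Ks n k) (\<lambda>S. S)"
  define P' where "P' = Sigma (Ks n (k-1)) (\<lambda>S'. {..<n} - S')"
  have finP: "finite P" unfolding P_def Ks_def by (intro finite_SigmaI) (auto intro: finite_subset)
  have finP': "finite P'" unfolding P'_def by (intro finite_SigmaI) auto
  have e0: "0 \<le> e S i" for S i unfolding e_def by (rule EA_N_nonneg[OF p])
  have sumPP': "(\<Sum>(S,i)\<in>P. e S i) = (\<Sum>(S',i)\<in>P'. EA p A (xS S') T (\<lambda>s. Nq i (fst s)))"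
  proof (rule sum.reindex_bij_witness[where i="\<lambda>(S',i). (insert i S', i)" and j="\<lambda>(S,i). (S - {i}, i)"])
    fix a assume "a \<in> P"
    then obtain S i where a: "a = (S,i)" "S \<subseteq> {..<n}" "card S = k" "i \<in> S" by (auto simp: P_def Ks_def)
    have fS: "finite S" using a(2) finite_subset by blast
    show "(case case a of (S, i) \<Rightarrow> (S - {i}, i) of (S', i) \<Rightarrow> (insert i S', i)) = a" using a by auto
    show "(case a of (S, i) \<Rightarrow> (S - {i}, i)) \<in> P'" using a fS by (auto simp: P'_def Ks_def)
    show "(case case a of (S, i) \<Rightarrow> (S - {i}, i) of (S', i) \<Rightarrow> EA p A (xS S') T (\<lambda>s. Nq i (fst s))) = (case a of (S, i) \<Rightarrow> e S i)"
      using a by (simp add: e_def)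
  next
    fix b assume "b \<in> P'"
    then obtain S' i where b: "b = (S',i)" "S' \<subseteq> {..<n}" "card S' = k-1" "i < n" "i \<notin> S'" by (auto simp: P'_def Ks_def)
    have fS: "finite S'" using b(2) finite_subset by blast
    show "(case case b of (S', i) \<Rightarrow> (insert i S', i) of (S, i) \<Rightarrow> (S - {i}, i)) = b" using b by auto
    show "(case b of (S', i) \<Rightarrow> (insert i S', i)) \<in> P" using b fS k by (auto simp: P_def Ks_def)
  qed
  have sumP'_le: "(\<Sum>(S',i)\<in>P'. EA p A (xS S') T (\<lambda>s. Nq i (fst s))) \<le> card (Ks n (k-1)) * real T"
  proof -
    have "(\<Sum>(S',i)\<in>P'. EA p A (xS S') T (\<lambda>s. Nq i (fst s))) = (\<Sum>S'\<in>Ks n (k-1). \<Sum>i\<in>{..<n} - S'. EA p A (xS S') T (\<lambda>s. Nq i (fst s)))"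
      unfolding P'_def by (rule sum.Sigma[symmetric]) auto
    also have "\<dots> \<le> (\<Sum>S'\<in>Ks n (k-1). real T)"
      by (intro sum_mono sumEN_le[OF valid p]) auto
    finally show ?thesis by simp
  qed
  have cardP': "card P' = card (Ks n (k-1)) * (n - (k-1))"
  proof -
    have "card P' = (\<Sum>S'\<in>Ks n (k-1). card ({..<n} - S'))" unfolding P'_def by (rule card_SigmaI) auto
    also have "\<dots> = (\<Sum>S'\<in>Ks n (k-1). n - (k-1))"
    proof (intro sum.cong refl)
      fix S' assume "S' \<in> Ks n (k-1)"
      then have "S' \<subseteq> {..<n}" "card S' = k-1" by (auto simp: Ks_def)
      then show "card ({..<n} - S') = n - (k-1)" by (simp add: card_Diff_subset finite_subset)
    qed
    finally show ?thesis by simp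
  qed
  have cardPP': "card P = card P'"
  proof (rule bij_betw_same_card[where f="\<lambda>(S,i). (S - {i}, i)"])
    show "bij_betw (\<lambda>(S,i). (S - {i}, i)) P P'"
    proof (rule bij_betwI[where g="\<lambda>(S',i). (insert i S', i)"])
      show "(\<lambda>(S,i). (S - {i}, i)) \<in> P \<rightarrow> P'"
      proof
        fix a assume "a \<in> P"
        then obtain S i where a: "a = (S,i)" "S \<subseteq> {..<n}" "card S = k" "i \<in> S" by (auto simp: P_def Ks_def)
        have fS: "finite S" using a(2) finite_subset by blast
        show "(\<lambda>(S,i). (S - {i}, i)) a \<in> P'" using a fS by (auto simp: P'_def Ks_def)
      qed
      show "(\<lambda>(S',i). (insert i S', i)) \<in> P' \<rightarrow> P"
      proof
        fix b assume "b \<in> P'"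
        then obtain S' i where b: "b = (S',i)" "S' \<subseteq> {..<n}" "card S' = k-1" "i < n" "i \<notin> S'" by (auto simp: P'_def Ks_def)
        have fS: "finite S'" using b(2) finite_subset by blast
        show "(\<lambda>(S',i). (insert i S', i)) b \<in> P" using b fS k by (auto simp: P_def Ks_def)
      qed
    qed (auto simp: P_def P'_def)
  qed
  have cardP: "card P = card (Ks n k) * k"
  proof -
    have "card P = (\<Sum>S\<in>Ks n k. card S)" unfolding P_def by (rule card_SigmaI) (auto simp: Ks_def intro: finite_subset)
    also have "\<dots> = (\<Sum>S\<in>Ks n k. k)" by (intro sum.cong) (auto simp: Ks_def)
    finally show ?thesis by simp
  qed
  define B where "B = {(S,i)\<in>P. m < e S i}"
  have finB: "finite B" using finP unfolding B_def by (rule rev_finite_subset) auto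
  have "card B * m \<le> (\<Sum>(S,i)\<in>B. e S i)"
  proof -
    have "(\<Sum>(S,i)\<in>B. m) \<le> (\<Sum>(S,i)\<in>B. e S i)" by (intro sum_mono) (auto simp: B_def)
    then show ?thesis by simp
  qed
  also have "\<dots> \<le> (\<Sum>(S,i)\<in>P. e S i)" by (intro sum_mono2 finP) (auto simp: B_def e0)
  also have "\<dots> \<le> card (Ks n (k-1)) * real T" using sumPP' sumP'_le by simp
  also have "\<dots> \<le> card (Ks n (k-1)) * (m * (n - k + 1) / \<alpha>)"
    using mT al by (intro mult_left_mono) (auto simp: field_simps)
  also have "\<dots> = m * card P / \<alpha>" using cardP' cardPP' k by (simp add: of_nat_diff)
  finally have "card B * m \<le> m * card P / \<alpha>" .
  then have "m * card B \<le> m * (card P / \<alpha>)" by (simp add: mult.commute)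
  then have cB: "card B \<le> card P / \<alpha>" using m by (rule mult_left_le_imp_le)
  define good where "good S = {i\<in>S. e S i \<le> m}" for S
  have "card P - card B \<le> card (P - B)" by (simp add: diff_card_le_card_Diff finB)
  have PB: "P - B = Sigma (Ks n k) good" by (auto simp: P_def B_def good_def)
  have cPB: "card (P - B) = (\<Sum>S\<in>Ks n k. card (good S))"
    unfolding PB by (rule card_SigmaI) (auto simp: good_def Ks_def intro: finite_subset)
  have BP: "B \<subseteq> P" by (auto simp: B_def)
  have "card (P - B) = card P - card B" using finB BP by (rule card_Diff_subset)
  then have "real (card (P - B)) = real (card P) - real (card B)"
    using card_mono[OF finP BP] by (simp add: of_nat_diff)
  then have lowPB: "card (Ks n k) * (k * (1 - 1/\<alpha>)) \<le> (\<Sum>S\<in>Ks n k. real (card (good S)))"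
    using cB cPB cardP by (simp add: algebra_simps)
  have ne: "Ks n k \<noteq> {}" using k by (auto simp: Ks_def intro!: exI[of _ "{..<k}"])
  have "\<exists>S\<in>Ks n k. k * (1 - 1/\<alpha>) \<le> real (card (good S))"
  proof (rule ccontr)
    assume "\<not> ?thesis"
    then have "\<And>S. S \<in> Ks n k \<Longrightarrow> real (card (good S)) < k * (1 - 1/\<alpha>)" by auto
    then have "(\<Sum>S\<in>Ks n k. real (card (good S))) < (\<Sum>S\<in>Ks n k. k * (1 - 1/\<alpha>))"
      using ne by (intro sum_strict_mono) auto
    then show False using lowPB by simp
  qed
  then show ?thesis by (auto simp: Ks_def good_def e_def)
qed

lemma err_le_worst:
  assumes "x \<in> inputs n"
  shows "err_prob p n k A T x \<le> worst_err p n k A T"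
  unfolding worst_err_def
proof (rule cSUP_upper[OF assms])
  show "bdd_above ((err_prob p n k A T) ` inputs n)"
    by (rule bdd_aboveI[where M=1]) (auto simp: err_prob_def)
qed

lemma xS_inputs: "S \<subseteq> {..<n} \<Longrightarrow> xS S \<in> inputs n"
  by (auto simp: inputs_def xS_def)

lemma TH_xS: "S \<subseteq> {..<n} \<Longrightarrow> TH n k (xS S) = (k \<le> card S)"
proof -
  assume "S \<subseteq> {..<n}"
  then have "{i. i < n \<and> xS S i} = S" by (auto simp: xS_def)
  then show ?thesis by (simp add: TH_def)
qed

lemma lb_final:
  fixes \<alpha> m \<delta> p :: real
  assumes valid: "valid_alg n A" and k: "1 \<le> k" "k \<le> n" and p: "0 < p" "p < 1/2"
    and al: "1 < \<alpha>" and m: "0 < m" and mT: "\<alpha> * T \<le> m * real (n - k + 1)"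
    and we: "worst_err p n k A T \<le> \<delta>" and d0: "0 < \<delta>"
    and r: "4*p*(1-p) / ((1-2*p)^2 * \<alpha>^2 * (\<alpha>-1)^2 * m) \<le> (\<alpha>-1)/(2*\<alpha>)"
    and d1: "\<delta> \<le> (\<alpha>-1)/(2*\<alpha>) / 8" and d2: "\<delta> \<le> ((\<alpha>-1)/(2*\<alpha>))^2 / 8"
  shows "ln (k/\<delta>) + ln ((1-1/\<alpha>) * ((\<alpha>-1)/(2*\<alpha>))^2 / 2) \<le> D_KL p * \<alpha>^2 * m"
proof -
  have p01: "0 \<le> p" "p \<le> 1" using p by auto
  define \<rho>0 where "\<rho>0 = (\<alpha>-1)/(2*\<alpha>)"
  have r0: "0 < \<rho>0" unfolding \<rho>0_def using al by simp
  obtain S where S: "S \<subseteq> {..<n}" "card S = k"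
    and G: "k * (1 - 1/\<alpha>) \<le> card {i\<in>S. EA p A (xS (S-{i})) T (\<lambda>s. Nq i (fst s)) \<le> m}"
    using exists_good[OF valid k m al mT p01] by blast
  define G where "G = {i\<in>S. EA p A (xS (S-{i})) T (\<lambda>s. Nq i (fst s)) \<le> m}"
  have fS: "finite S" using S(1) finite_subset by blast
  have fG: "finite G" unfolding G_def using fS by simp
  define g where "g = real (card G)"
  have gpos: "0 < g" unfolding g_def using G k al unfolding G_def[symmetric]
  proof -
    have "0 < k * (1 - 1/\<alpha>)" using k al by (simp add: field_simps)
    then show "0 < real (card G)" using G unfolding G_def by linarith
  qed
  define t where "t = (1-2*p) * \<alpha>^2 * m"
  define c where "c = ln ((1-p)/p)"
  define \<rho> where "\<rho> = 1 - 1/\<alpha> - 4*p*(1-p) / ((1-2*p)^2 * \<alpha>^2 * (\<alpha>-1)^2 * m)"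
  have a2: "1 - 1/\<alpha> = 2*\<rho>0" unfolding \<rho>0_def using al by (simp add: field_simps)
  have \<rho>: "\<rho>0 \<le> \<rho>" using r a2 unfolding \<rho>_def \<rho>0_def[symmetric] by linarith
  define K where "K = g * \<rho>0 / (4*\<delta>)"
  have K: "0 < K" unfolding K_def using gpos r0 d0 by simp
  have x: "x \<in> G \<Longrightarrow> xS S x" for x by (auto simp: G_def xS_def)
  have h1: "TH n k (xS S)" using S by (simp add: TH_xS)
  have h2: "\<not> TH n k ((xS S)(i := False))" if "i \<in> G" for i
  proof -
    have "i \<in> S" using that by (auto simp: G_def)
    then have "card (S - {i}) = k - 1" using S fS by simp
    moreover have "S - {i} \<subseteq> {..<n}" using S by auto
    ultimately show ?thesis using k by (simp add: xS_upd TH_xS)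
  qed
  have h3: "err_prob p n k A T (xS S) \<le> \<delta>" using err_le_worst[OF xS_inputs[OF S(1)], of p k A T] we by linarith
  have h4: "err_prob p n k A T ((xS S)(i := False)) \<le> \<delta>" if "i \<in> G" for i
  proof -
    have "S - {i} \<subseteq> {..<n}" using S by auto
    then show ?thesis using err_le_worst[OF xS_inputs, of "S - {i}" n p k A T] we by (simp add: xS_upd)
  qed
  have h5: "EA p A ((xS S)(i := False)) T (\<lambda>s. Nq i (fst s)) \<le> m" if "i \<in> G" for i
    using that by (simp add: G_def xS_upd)
  have core: "g * (\<rho> - \<delta>) \<le> K * \<delta> + (g * exp (c*t) + g^2) / (4*K)"
    using lb_core[OF p m al K fG x h1 h2 h3 h4 h5] unfolding g_def t_def c_def \<rho>_def by simp
  have Kd: "K * \<delta> = g * \<rho>0 / 4" unfolding K_def using d0 by simp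
  have K4: "4*K = g*\<rho>0/\<delta>" unfolding K_def by simp
  have "(g * exp (c*t) + g^2) / (4*K) = (g * (exp (c*t) + g)) * \<delta> / (g * \<rho>0)"
    unfolding K4 by (simp add: power2_eq_square algebra_simps)
  also have "\<dots> = (exp (c*t) + g) * \<delta> / \<rho>0" using gpos by simp
  finally have K2: "(g * exp (c*t) + g^2) / (4*K) = (exp (c*t) + g) * \<delta> / \<rho>0" .
  have "g * (\<rho>0 - \<delta>) \<le> g * (\<rho> - \<delta>)" using \<rho> gpos by (intro mult_left_mono) auto
  then have C1: "g * (\<rho>0 - \<delta>) \<le> g * \<rho>0 / 4 + (exp (c*t) + g) * \<delta> / \<rho>0"
    using core Kd K2 by linarith
  have "(g * (\<rho>0 - \<delta>) - g * \<rho>0 / 4) * \<rho>0 \<le> ((exp (c*t) + g) * \<delta> / \<rho>0) * \<rho>0"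
    using C1 r0 by (intro mult_right_mono) auto
  also have "\<dots> = (exp (c*t) + g) * \<delta>" using r0 by simp
  finally have A0: "(g * (\<rho>0 - \<delta>) - g * \<rho>0 / 4) * \<rho>0 \<le> (exp (c*t) + g) * \<delta>" .
  have A: "g * (\<rho>0 * (3/4 * \<rho>0 - \<delta>) - \<delta>) \<le> exp (c*t) * \<delta>"
    using A0 by (simp add: algebra_simps)
  have "\<rho>0 * \<delta> \<le> \<rho>0 * (\<rho>0 / 8)" using d1 r0 unfolding \<rho>0_def[symmetric] by (intro mult_left_mono) auto
  then have "\<rho>0 * (3/4 * \<rho>0 - \<delta>) - \<delta> \<ge> \<rho>0^2 / 2"
    using d2 unfolding \<rho>0_def[symmetric] by (simp add: power2_eq_square algebra_simps)
  then have "g * (\<rho>0 * (3/4 * \<rho>0 - \<delta>) - \<delta>) \<ge> g * (\<rho>0^2 / 2)" using gpos by (intro mult_left_mono) auto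
  with A have B: "g * (\<rho>0^2 / 2) \<le> exp (c*t) * \<delta>" by linarith
  have g2: "k * (1 - 1/\<alpha>) \<le> g" using G unfolding g_def G_def .
  have kpos: "0 < real k" using k by simp
  have "k * (1 - 1/\<alpha>) * (\<rho>0^2 / 2) \<le> g * (\<rho>0^2 / 2)"
    using g2 by (intro mult_right_mono) auto
  with B have "k * (1 - 1/\<alpha>) * (\<rho>0^2 / 2) \<le> exp (c*t) * \<delta>" by linarith
  then have "(k/\<delta>) * ((1 - 1/\<alpha>) * \<rho>0^2 / 2) \<le> exp (c*t)"
    using d0 by (simp add: field_simps)
  moreover have "0 < (k/\<delta>) * ((1 - 1/\<alpha>) * \<rho>0^2 / 2)" using kpos d0 al r0 by (simp add: field_simps)
  ultimately have "ln ((k/\<delta>) * ((1 - 1/\<alpha>) * \<rho>0^2 / 2)) \<le> c * t"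
    by (metis ln_exp ln_le_cancel_iff exp_gt_zero)
  moreover have "ln ((k/\<delta>) * ((1 - 1/\<alpha>) * \<rho>0^2 / 2)) = ln (k/\<delta>) + ln ((1 - 1/\<alpha>) * \<rho>0^2 / 2)"
  proof (rule ln_mult_pos)
    show "0 < real k / \<delta>" using kpos d0 by simp
    have "0 < 1 - 1/\<alpha>" using al by (simp add: field_simps)
    then show "0 < (1 - 1/\<alpha>) * \<rho>0^2 / 2" using r0 by simp
  qed
  moreover have "c * t = D_KL p * \<alpha>^2 * m" unfolding c_def t_def D_KL_def by simp
  ultimately show ?thesis unfolding \<rho>0_def by simp
qed

lemma ln_le_2sqrt: "0 < y \<Longrightarrow> ln y \<le> 2 * sqrt y"
proof -
  assume y: "0 < y"
  have "ln y = 2 * ln (sqrt y)" using y by (simp add: ln_sqrt)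
  also have "\<dots> \<le> 2 * (sqrt y - 1)" using y by (intro mult_left_mono ln_le_minus_one) auto
  finally show ?thesis by simp
qed

locale asy =
  fixes k :: "nat \<Rightarrow> nat" and \<delta> :: "nat \<Rightarrow> real" and \<epsilon> :: real
  assumes ko: "(\<lambda>n. real (k n)) \<in> o(\<lambda>n. real n)" and d0: "\<delta> \<longlonglongrightarrow> 0"
    and k1: "\<forall>\<^sub>F n in sequentially. 1 \<le> k n"
    and dpow: "\<forall>\<^sub>F n in sequentially. real n powr (-1 + \<epsilon>) \<le> \<delta> n"
begin

lemma ev_dpos: "\<forall>\<^sub>F n in sequentially. 0 < \<delta> n"
  using dpow eventually_ge_at_top[of 1]
proof eventually_elim
  case (elim n)
  then have "0 < real n powr (-1 + \<epsilon>)" by simp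
  then show ?case using elim by linarith
qed

lemma ev_dle: "0 < r \<Longrightarrow> \<forall>\<^sub>F n in sequentially. \<delta> n \<le> r"
  using order_tendstoD(2)[OF d0, of r] by (auto elim: eventually_mono)

lemma ev_kle: "0 < r \<Longrightarrow> \<forall>\<^sub>F n in sequentially. real (k n) \<le> r * real n"
  using landau_o.smallD[OF ko, of r] by (auto elim: eventually_mono)

lemma ev_L: "\<forall>\<^sub>F n in sequentially. C \<le> ln (k n / \<delta> n)"
  using ev_dle[OF exp_gt_zero[of "-C"]] ev_dpos k1
proof eventually_elim
  case (elim n)
  have "ln (\<delta> n) \<le> ln (exp (-C))" using elim by (intro ln_mono) auto
  then have "C \<le> - ln (\<delta> n)" by simp
  moreover have "0 \<le> ln (real (k n))" using elim by simp
  moreover have "ln (k n / \<delta> n) = ln (k n) - ln (\<delta> n)" using elim by (intro ln_divide_pos) auto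
  ultimately show ?case by linarith
qed

lemma ev_klog:
  fixes r :: real
  assumes r: "0 < r" "r \<le> 1"
  shows "\<forall>\<^sub>F n in sequentially. k n * ln (3 * n / \<delta> n) \<le> r * n * ln (k n / \<delta> n)"
proof -
  have kk: "\<forall>\<^sub>F n in sequentially. real (k n) \<le> (r/4)^2 * real n" using r by (intro ev_kle) simp
  show ?thesis
  using kk ev_dpos k1 ev_L[of "max 1 (ln 3)"] eventually_ge_at_top[of 1]
proof eventually_elim
  case (elim n)
  define L where "L = ln (k n / \<delta> n)"
  have kp: "0 < real (k n)" using elim by simp
  have np: "0 < real n" using elim by simp
  have L1: "1 \<le> L" "ln 3 \<le> L" using elim by (auto simp: L_def)
  have dp: "0 < \<delta> n" using elim by simp
  have e: "ln (3 * n / \<delta> n) = ln 3 + ln (n / k n) + L"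
  proof -
    have "ln (3 * n / \<delta> n) = ln (3 * (n / k n) * (k n / \<delta> n))" using kp by simp
    also have "\<dots> = ln (3 * (n / k n)) + ln (k n / \<delta> n)" using kp np dp
      by (intro ln_mult_pos) auto
    also have "ln (3 * (n / k n)) = ln 3 + ln (n / k n)" using kp np
      by (intro ln_mult_pos) auto
    finally show ?thesis by (simp add: L_def)
  qed
  have t1: "k n * ln 3 \<le> k n * L" using L1 kp by (intro mult_left_mono) auto
  have t2: "k n * ln (n / k n) \<le> 2 * sqrt (real (k n) * real n)"
  proof -
    have "k n * ln (n / k n) \<le> k n * (2 * sqrt (n / k n))" using kp np by (intro mult_left_mono ln_le_2sqrt) auto
    also have "\<dots> = 2 * sqrt (real (k n) * real n)"
    proof -
      have "real (k n) * n = (real (k n))^2 * (n / k n)" using kp by (simp add: power2_eq_square)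
      then have "sqrt (real (k n) * real n) = sqrt ((real (k n))^2) * sqrt (n / k n)" by (simp only: real_sqrt_mult)
      then have "k n * sqrt (n / k n) = sqrt (real (k n) * real n)" using kp by simp
      then show ?thesis by simp
    qed
    finally show ?thesis .
  qed
  have t3: "sqrt (real (k n) * real n) \<le> (r/4) * n"
  proof -
    have "real (k n) * real n \<le> (r/4)^2 * n * n" using elim np by (intro mult_right_mono) auto
    then have "sqrt (real (k n) * real n) \<le> sqrt (((r/4) * n)^2)" by (simp add: power2_eq_square algebra_simps)
    also have "\<dots> = (r/4) * n" using r np by simp
    finally show ?thesis .
  qed
  have t4: "k n * L \<le> (r/4)^2 * n * L" using elim L1 by (intro mult_right_mono) auto
  have r2: "(r/4)^2 \<le> r/4" using r by (simp add: power2_eq_square)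
  have "k n * ln (3 * n / \<delta> n) = k n * ln 3 + k n * ln (n / k n) + k n * L" unfolding e by (simp add: algebra_simps)
  also have "\<dots> \<le> 2 * (k n * L) + 2 * ((r/4) * n)" using t1 t2 t3 by linarith
  also have "\<dots> \<le> 2 * ((r/4) * n * L) + 2 * ((r/4) * n * L)"
  proof -
    have "(r/4)^2 * (n * L) \<le> (r/4) * (n * L)" using r2 L1 np by (intro mult_right_mono) auto
    then have "k n * L \<le> (r/4) * n * L" using t4 by (simp add: algebra_simps)
    moreover have "(r/4) * n * 1 \<le> (r/4) * n * L" using L1 r np by (intro mult_left_mono) auto
    ultimately show ?thesis by linarith
  qed
  also have "\<dots> = r * n * L" by simp
  finally show ?case by (simp add: L_def)
qed
qed

end

lemma exists_mu:
  fixes p \<kappa> :: real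
  assumes p: "0 < p" "p < 1/2" and ka: "0 < \<kappa>" "\<kappa> < 1 - 2*p"
  shows "\<exists>\<mu>>0. p * exp \<mu> + (1-p) * exp (-\<mu>) \<le> exp (-(\<mu>*\<kappa>))"
proof -
  define g where "g \<mu> = p * exp (\<mu>*(1+\<kappa>)) + (1-p) * exp (-(\<mu>*(1-\<kappa>)))" for \<mu> :: real
  have der: "DERIV g 0 :> p*(1+\<kappa>) - (1-p)*(1-\<kappa>)"
    unfolding g_def by (auto intro!: derivative_eq_intros simp: algebra_simps)
  have neg: "p*(1+\<kappa>) - (1-p)*(1-\<kappa>) < 0" using ka p by (simp add: algebra_simps)
  obtain d where d: "d > 0" "\<And>h. h > 0 \<Longrightarrow> h < d \<Longrightarrow> g (0 + h) < g 0"
    using DERIV_neg_dec_right[OF der neg] by blast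
  define \<mu> where "\<mu> = d/2"
  have mu: "0 < \<mu>" "\<mu> < d" using d by (auto simp: \<mu>_def)
  have g0: "g 0 = 1" by (simp add: g_def)
  have "g \<mu> < 1" using d(2)[OF mu] g0 by simp
  have "p * exp \<mu> + (1-p) * exp (-\<mu>) = exp (-(\<mu>*\<kappa>)) * g \<mu>"
    unfolding g_def by (simp add: algebra_simps flip: exp_add)
  also have "\<dots> \<le> exp (-(\<mu>*\<kappa>)) * 1" using \<open>g \<mu> < 1\<close> by (intro mult_left_mono) auto
  finally show ?thesis using mu by auto
qed

lemma DKL_pos: "0 < p \<Longrightarrow> p < 1/2 \<Longrightarrow> 0 < D_KL p"
  unfolding D_KL_def by (intro mult_pos_pos) (auto simp: field_simps)

lemma alpha_cube:
  fixes \<eta> :: real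
  assumes "0 < \<eta>" "\<eta> < 1"
  shows "(1 + \<eta>/8)^3 * (1 - \<eta>) \<le> 1 - \<eta>/16"
proof -
  define u where "u = \<eta>/8"
  have u: "0 < u" "u \<le> 1/8" using assms by (auto simp: u_def)
  have u2: "u^2 \<le> u/8" using u by (simp add: power2_eq_square mult_right_mono[of u "1/8" u, simplified])
  have u3: "u^3 \<le> u/64"
  proof -
    have "u^3 = u^2 * u" by (simp add: power3_eq_cube power2_eq_square)
    also have "\<dots> \<le> (u/8) * (1/8)" using u2 u by (intro mult_mono) auto
    finally show ?thesis using u by simp
  qed
  have "(1+u)^3 = 1 + 3*u + 3*u^2 + u^3" by (simp add: power3_eq_cube power2_eq_square algebra_simps)
  also have "\<dots> \<le> 1 + 4*u" using u2 u3 u by linarith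
  finally have a3: "(1+u)^3 \<le> 1 + 4*u" .
  have "(1+u)^3 * (1 - \<eta>) \<le> (1 + 4*u) * (1 - \<eta>)" using a3 assms by (intro mult_right_mono) auto
  also have "\<dots> = 1 - \<eta>/2 - \<eta>^2/2" unfolding u_def by (simp add: power2_eq_square field_simps)
  also have "\<dots> \<le> 1 - \<eta>/16" using assms zero_le_power2[of \<eta>] by linarith
  finally show ?thesis unfolding u_def .
qed

context asy begin

lemma lower:
  fixes p \<eta> :: real
  assumes p: "0 < p" "p < 1/2" and eta: "0 < \<eta>"
  shows "\<forall>\<^sub>F n in sequentially. \<forall>T A. valid_alg n A \<and> worst_err p n (k n) A T \<le> \<delta> n
     \<longrightarrow> (1 - \<eta>) * (real n * ln (real (k n) / \<delta> n) / D_KL p) \<le> real T"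
proof (cases "\<eta> < 1")
  case False
  have D: "0 < D_KL p" using DKL_pos[OF p] .
  show ?thesis using ev_L[of 0]
  proof eventually_elim
    case (elim n)
    have X: "0 \<le> real n * ln (real (k n) / \<delta> n) / D_KL p" using elim D by simp
    have "1 - \<eta> \<le> 0" using False by simp
    then have "(1 - \<eta>) * (real n * ln (real (k n) / \<delta> n) / D_KL p) \<le> 0" using X
      by (rule mult_nonpos_nonneg)
    then show ?case by (auto intro: order_trans)
  qed
next
  case True
  define D where "D = D_KL p"
  have D: "0 < D" unfolding D_def using DKL_pos[OF p] .
  define \<alpha> where "\<alpha> = 1 + \<eta>/8"
  have al: "1 < \<alpha>" unfolding \<alpha>_def using eta by simp
  define \<rho>0 where "\<rho>0 = (\<alpha>-1)/(2*\<alpha>)"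
  have r0: "0 < \<rho>0" unfolding \<rho>0_def using al by simp
  define Q where "Q = (1-2*p)^2 * \<alpha>^2 * (\<alpha>-1)^2"
  have Q: "0 < Q" unfolding Q_def using p al by simp
  define M where "M = 4*p*(1-p) / (Q * \<rho>0) + 1"
  have M: "0 < M" "4*p*(1-p) \<le> \<rho>0 * Q * M"
  proof -
    have "0 \<le> 4*p*(1-p) / (Q * \<rho>0)" using p Q r0 by simp
    then show "0 < M" unfolding M_def by simp
    have "\<rho>0 * Q * M = 4*p*(1-p) + \<rho>0 * Q" unfolding M_def using Q r0 by (simp add: field_simps)
    then show "4*p*(1-p) \<le> \<rho>0 * Q * M" using Q r0 by simp
  qed
  define C0 where "C0 = ln ((1-1/\<alpha>) * ((\<alpha>-1)/(2*\<alpha>))^2 / 2)"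
  have cube: "\<alpha>^3 * (1 - \<eta>) \<le> 1 - \<eta>/16" unfolding \<alpha>_def using alpha_cube[OF eta True] .
  have e1: "\<forall>\<^sub>F n in sequentially. \<delta> n \<le> \<rho>0/8" using r0 by (intro ev_dle) simp
  have e2: "\<forall>\<^sub>F n in sequentially. \<delta> n \<le> \<rho>0^2/8" using r0 by (intro ev_dle) simp
  have e3: "\<forall>\<^sub>F n in sequentially. real (k n) \<le> (\<eta>/32) * real n" using eta by (intro ev_kle) simp
  show ?thesis
    using e1 e2 e3 ev_dpos k1 eventually_ge_at_top[of 1]
      ev_L[of "max (max 0 (D * \<alpha>^2 * M - C0 + 1)) (- 32 * C0 / \<eta>)"]
  proof eventually_elim
    case (elim n)
    define L where "L = ln (real (k n) / \<delta> n)"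
    have L: "0 \<le> L" "D * \<alpha>^2 * M - C0 < L" "- 32 * C0 / \<eta> \<le> L" using elim by (auto simp: L_def)
    have kn: "1 \<le> k n" "k n \<le> n"
    proof -
      show "1 \<le> k n" using elim by simp
      have "(\<eta>/32) * real n \<le> real n" using True elim by simp
      then show "k n \<le> n" using elim by linarith
    qed
    define nk where "nk = real (n - k n + 1)"
    have nk: "nk = real n - real (k n) + 1" unfolding nk_def using kn by (simp add: of_nat_diff)
    have nk2: "(1 - \<eta>/32) * real n \<le> nk" using elim nk by (simp add: algebra_simps)
    have nkpos: "0 < nk" using nk kn by simp
    show ?case
    proof (intro allI impI, elim conjE)
      fix T A assume valid: "valid_alg n A" and we: "worst_err p n (k n) A T \<le> \<delta> n"
      define m where "m = max (\<alpha> * T / nk) M"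
      have m: "0 < m" "M \<le> m" "\<alpha> * T / nk \<le> m" using M unfolding m_def by auto
      have mT: "\<alpha> * T \<le> m * real (n - k n + 1)" using m(3) nkpos unfolding nk_def[symmetric] by (simp add: field_simps)
      have r: "4*p*(1-p) / ((1-2*p)^2 * \<alpha>^2 * (\<alpha>-1)^2 * m) \<le> (\<alpha>-1)/(2*\<alpha>)"
      proof -
        have "4*p*(1-p) \<le> \<rho>0 * Q * m"
          using M(2) m(2) r0 Q by (smt (verit) mult_left_mono mult_pos_pos)
        then have "4*p*(1-p) / (Q * m) \<le> \<rho>0" using Q m by (simp add: field_simps)
        then show ?thesis unfolding Q_def \<rho>0_def by (simp add: mult.assoc)
      qed
      have LB: "ln (real (k n) / \<delta> n) + C0 \<le> D_KL p * \<alpha>^2 * m"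
        unfolding C0_def
        by (rule lb_final[OF valid kn p al m(1) mT we _ r]) (use elim in \<open>auto simp: \<rho>0_def\<close>)
      then have LB': "L + C0 \<le> D * \<alpha>^2 * m" unfolding L_def D_def .
      have "D * \<alpha>^2 * M < D * \<alpha>^2 * m" using LB' L(2) by linarith
      then have "M < m" using D al by (simp add: mult_less_cancel_left_pos)
      then have mm: "m = \<alpha> * T / nk" unfolding m_def by (simp add: max_def split: if_splits)
      have "L + C0 \<le> D * \<alpha>^3 * T / nk" using LB' unfolding mm by (simp add: power3_eq_cube power2_eq_square)
      then have T1: "nk * (L + C0) \<le> D * \<alpha>^3 * T" using nkpos by (simp add: field_simps)
      have LC: "(1 - \<eta>/32) * L \<le> L + C0"
      proof -
        have "- 32 * C0 \<le> \<eta> * L" using L(3) eta by (simp add: field_simps)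
        then show ?thesis by (simp add: algebra_simps)
      qed
      have "(1 - \<eta>/16) * (real n * L) \<le> ((1 - \<eta>/32) * real n) * ((1 - \<eta>/32) * L)"
      proof -
        have "(1 - \<eta>/16) \<le> (1 - \<eta>/32) * (1 - \<eta>/32)" by (simp add: algebra_simps)
        then have "(1 - \<eta>/16) * (real n * L) \<le> ((1 - \<eta>/32) * (1 - \<eta>/32)) * (real n * L)"
          using L(1) by (intro mult_right_mono) auto
        then show ?thesis by (simp add: algebra_simps)
      qed
      also have "\<dots> \<le> nk * (L + C0)"
        using nk2 LC True L(1) nkpos by (intro mult_mono) auto
      also have "\<dots> \<le> D * \<alpha>^3 * T" by (rule T1)
      finally have T2: "(1 - \<eta>/16) * (real n * L) \<le> D * \<alpha>^3 * T" .
      have "(1 - \<eta>) * (real n * L / D) * D * \<alpha>^3 = (\<alpha>^3 * (1 - \<eta>)) * (real n * L)"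
        using D by (simp add: field_simps)
      also have "\<dots> \<le> (1 - \<eta>/16) * (real n * L)" using cube L(1) by (intro mult_right_mono) auto
      also have "\<dots> \<le> D * \<alpha>^3 * T" by (rule T2)
      finally have "((1 - \<eta>) * (real n * L / D)) * (D * \<alpha>^3) \<le> real T * (D * \<alpha>^3)" by (simp add: algebra_simps)
      then have "(1 - \<eta>) * (real n * L) \<le> real T * D" using D al by (simp add: mult_le_cancel_right_pos)
      then have "(1 - \<eta>) * (real n * L) / D \<le> real T" using D by (simp add: pos_divide_le_eq)
      then have "(1 - \<eta>) * (real n * L / D) \<le> real T" by simp
      then show "(1 - \<eta>) * (real n * ln (real (k n) / \<delta> n) / D_KL p) \<le> real T" unfolding L_def D_def .
    qed
  qed
qed

end

context asy begin

lemma upper: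
  fixes p \<eta> :: real
  assumes p: "0 < p" "p < 1/2" and eta: "0 < \<eta>"
  shows "\<forall>\<^sub>F n in sequentially. \<exists>T A. valid_alg n A \<and>
     real T \<le> (1 + \<eta>) * (real n * ln (real (k n) / \<delta> n) / D_KL p) \<and> worst_err p n (k n) A T \<le> \<delta> n"
proof -
  define c where "c = ln ((1-p)/p)"
  have c0: "0 < c" unfolding c_def using p by (simp add: field_simps)
  define D where "D = D_KL p"
  have Dc: "D = (1-2*p) * c" unfolding D_def D_KL_def c_def ..
  have D0: "0 < D" unfolding D_def using DKL_pos[OF p] .
  define \<kappa> where "\<kappa> = (1-2*p)/(1+\<eta>/4)"
  have ka: "0 < \<kappa>" "\<kappa> < 1 - 2*p" "\<kappa> \<le> 1" unfolding \<kappa>_def using p eta by (auto simp: field_simps)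
  obtain \<mu> where mu: "0 < \<mu>" "p * exp \<mu> + (1-p) * exp (-\<mu>) \<le> exp (-(\<mu>*\<kappa>))"
    using exists_mu[OF p ka(1,2)] by blast
  define \<beta> where "\<beta> = p * exp \<mu> + (1-p) * exp (-\<mu>)"
  have be: "0 \<le> \<beta>" "\<beta> \<le> exp (-(\<mu>*\<kappa>))" unfolding \<beta>_def using mu p by auto
  define e2 where "e2 = (3*\<eta>/4)/(1+\<eta>/4)"
  have e2: "0 < e2" unfolding e2_def using eta by simp
  have kD: "\<kappa> * (1+\<eta>) / D = (1 + e2) / c"
  proof -
    have q: "1 - 2*p \<noteq> 0" "1 + \<eta>/4 \<noteq> 0" "c \<noteq> 0" using p eta c0 by auto
    have "1 + e2 = (1+\<eta>)/(1+\<eta>/4)" unfolding e2_def using q(2) by (simp add: field_simps)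
    moreover have "\<kappa> * (1+\<eta>) / D = ((1+\<eta>)/(1+\<eta>/4)) / c"
    proof -
      have "\<kappa> * (1+\<eta>) = (1-2*p) * ((1+\<eta>)/(1+\<eta>/4))" unfolding \<kappa>_def by simp
      then have "\<kappa> * (1+\<eta>) / D = ((1-2*p) * ((1+\<eta>)/(1+\<eta>/4))) / ((1-2*p) * c)" by (simp add: Dc)
      also have "\<dots> = ((1+\<eta>)/(1+\<eta>/4)) / c" using q(1) by (rule mult_divide_mult_cancel_left)
      finally show ?thesis .
    qed
    ultimately show ?thesis by simp
  qed
  define r where "r = min 1 (e2/6)"
  have r: "0 < r" "r \<le> 1" "r \<le> e2/6" unfolding r_def using e2 by auto
  have evk: "\<forall>\<^sub>F n in sequentially. real (k n) \<le> 1 * real n" by (intro ev_kle) simp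
  show ?thesis
    using ev_klog[OF r(1,2)] evk ev_dle[OF zero_less_one] ev_dpos k1 eventually_ge_at_top[of "max 1 (nat \<lceil>12*c/(\<mu>*e2)\<rceil>)"]
      ev_L[of "max (max 1 (ln 3)) (max (6 * ln 3 / e2) (6 * c / e2))"]
  proof eventually_elim
    case (elim n)
    define L where "L = ln (real (k n) / \<delta> n)"
    have dp: "0 < \<delta> n" "\<delta> n \<le> 1" using elim by auto
    have kn: "1 \<le> k n" "k n \<le> n" using elim by auto
    have n1: "1 \<le> n" using elim by auto
    have nbig: "12*c/(\<mu>*e2) \<le> real n"
    proof -
      have "nat \<lceil>12*c/(\<mu>*e2)\<rceil> \<le> n" using elim by simp
      then have "real (nat \<lceil>12*c/(\<mu>*e2)\<rceil>) \<le> real n" by (simp only: of_nat_le_iff)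
      moreover have "12*c/(\<mu>*e2) \<le> real (nat \<lceil>12*c/(\<mu>*e2)\<rceil>)" by (rule real_nat_ceiling_ge)
      ultimately show ?thesis by linarith
    qed
    have L: "1 \<le> L" "ln 3 \<le> L" "6 * ln 3 / e2 \<le> L" "6 * c / e2 \<le> L" using elim by (auto simp: L_def)
    have klog: "k n * ln (3 * n / \<delta> n) \<le> r * n * L" using elim by (simp add: L_def)
    have kp: "0 < real (k n)" using kn by simp
    have np: "0 < real n" using n1 by simp
    define a where "a = nat \<lceil>ln (3 * k n / \<delta> n) / c\<rceil>"
    define b where "b = nat \<lceil>ln (3 * n / \<delta> n) / c\<rceil>"
    define T where "T = nat \<lfloor>(1 + \<eta>) * (real n * L / D)\<rfloor>"
    have la: "ln (3 * k n / \<delta> n) = ln 3 + L"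
    proof -
      have "ln (3 * (k n / \<delta> n)) = ln 3 + ln (k n / \<delta> n)" using kp dp by (intro ln_mult_pos) auto
      then show ?thesis by (simp add: L_def)
    qed
    have l30: "0 < ln (3::real)" by simp
    have lapos: "0 < ln (3 * k n / \<delta> n)" using la L l30 by linarith
    have lbpos: "0 < ln (3 * n / \<delta> n)"
    proof -
      have "1 < 3 * real n / \<delta> n" using dp np n1 by (simp add: field_simps)
      then show ?thesis by simp
    qed
    have a1: "1 \<le> a"
    proof -
      have "0 < ln (3 * k n / \<delta> n) / c" using lapos c0 by simp
      then have "0 < \<lceil>ln (3 * k n / \<delta> n) / c\<rceil>" by simp
      then show ?thesis unfolding a_def by linarith
    qed
    have b1: "1 \<le> b"
    proof -
      have "0 < ln (3 * n / \<delta> n) / c" using lbpos c0 by simp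
      then have "0 < \<lceil>ln (3 * n / \<delta> n) / c\<rceil>" by simp
      then show ?thesis unfolding b_def by linarith
    qed
    have aup: "real a \<le> ln (3 * k n / \<delta> n) / c + 1"
    proof -
      have X0: "0 < ln (3 * k n / \<delta> n) / c" using lapos c0 by simp
      have "0 \<le> \<lceil>ln (3 * k n / \<delta> n) / c\<rceil>" using X0 by (subst zero_le_ceiling) linarith
      then have "real a = of_int \<lceil>ln (3 * k n / \<delta> n) / c\<rceil>" unfolding a_def by simp
      then show ?thesis using of_int_ceiling_le_add_one[of "ln (3 * k n / \<delta> n) / c"] by linarith
    qed
    have bup: "real b \<le> ln (3 * n / \<delta> n) / c + 1"
    proof -
      have X0: "0 < ln (3 * n / \<delta> n) / c" using lbpos c0 by simp
      have "0 \<le> \<lceil>ln (3 * n / \<delta> n) / c\<rceil>" using X0 by (subst zero_le_ceiling) linarith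
      then have "real b = of_int \<lceil>ln (3 * n / \<delta> n) / c\<rceil>" unfolding b_def by simp
      then show ?thesis using of_int_ceiling_le_add_one[of "ln (3 * n / \<delta> n) / c"] by linarith
    qed
    have alow: "ln (3 * k n / \<delta> n) \<le> c * a"
    proof -
      have "ln (3 * k n / \<delta> n) / c \<le> real a" unfolding a_def by linarith
      then show ?thesis using c0 by (simp add: field_simps)
    qed
    have blow: "ln (3 * n / \<delta> n) \<le> c * b"
    proof -
      have "ln (3 * n / \<delta> n) / c \<le> real b" unfolding b_def by linarith
      then show ?thesis using c0 by (simp add: field_simps)
    qed
    have Tnn: "0 \<le> (1 + \<eta>) * (real n * L / D)" using eta L D0 by simp
    have Tup: "real T \<le> (1 + \<eta>) * (real n * L / D)" unfolding T_def using Tnn by linarith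
    have Tlow: "(1 + \<eta>) * (real n * L / D) - 1 \<le> real T" unfolding T_def using Tnn by linarith
    have E1: "exp (-c*b) * n \<le> \<delta> n / 3"
    proof -
      have "exp (-c*b) \<le> exp (- ln (3 * n / \<delta> n))" using blow by simp
      also have "\<dots> = \<delta> n / (3 * n)" using dp np by (simp add: exp_minus)
      finally show ?thesis using np by (simp add: field_simps)
    qed
    have E2: "exp (-c*a) * k n \<le> \<delta> n / 3"
    proof -
      have "exp (-c*a) \<le> exp (- ln (3 * k n / \<delta> n))" using alow by simp
      also have "\<dots> = \<delta> n / (3 * k n)" using dp kp by (simp add: exp_minus)
      finally show ?thesis using kp by (simp add: field_simps)
    qed
    have E3: "\<beta>^T * exp (\<mu> * (real a * n + real b * k n)) \<le> \<delta> n / 3"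
    proof -
      have l3: "ln (3 / \<delta> n) \<le> 2 * L"
      proof -
        have "ln (3 / \<delta> n) = ln 3 - ln (\<delta> n)" using dp by (simp add: ln_divide_pos)
        moreover have "L = ln (k n) - ln (\<delta> n)" unfolding L_def using kp dp by (simp add: ln_divide_pos)
        moreover have "0 \<le> ln (real (k n))" using kn by simp
        ultimately show ?thesis using L by linarith
      qed
      have i1: "n * ln 3 \<le> (e2/6) * n * L"
      proof -
        have "ln 3 \<le> (e2/6) * L" using L(3) e2 by (simp add: field_simps)
        then show ?thesis using np by (simp add: mult_left_mono mult.assoc mult.left_commute)
      qed
      have i2: "c * n \<le> (e2/6) * n * L"
      proof -
        have "c \<le> (e2/6) * L" using L(4) e2 by (simp add: field_simps)
        then show ?thesis using np by (simp add: mult_left_mono mult.assoc mult.left_commute)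
      qed
      have i3: "k n * ln (3 * n / \<delta> n) \<le> (e2/6) * n * L"
      proof -
        have "r * (n * L) \<le> (e2/6) * (n * L)" using r np L by (intro mult_right_mono) auto
        then show ?thesis using klog by (simp add: mult.assoc)
      qed
      have i4: "c * k n \<le> (e2/6) * n * L"
      proof -
        have "c * k n \<le> c * n" using kn c0 by (intro mult_left_mono) auto
        then show ?thesis using i2 by linarith
      qed
      have i5: "c * ln (3 / \<delta> n) / \<mu> \<le> (e2/6) * n * L"
      proof -
        have "c * ln (3 / \<delta> n) / \<mu> \<le> c * (2 * L) / \<mu>" using l3 c0 mu by (simp add: divide_right_mono)
        also have "\<dots> = (12 * c / (\<mu> * e2)) * ((e2/6) * L)" using mu e2 by (simp add: field_simps)
        also have "\<dots> \<le> real n * ((e2/6) * L)" using nbig e2 L by (intro mult_right_mono) auto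
        finally show ?thesis by (simp add: algebra_simps)
      qed
      have i6: "c \<le> (e2/6) * n * L"
      proof -
        have "c \<le> (e2/6) * L" using L(4) e2 by (simp add: field_simps)
        also have "\<dots> \<le> (e2/6) * L * n"
        proof -
          have "(e2/6) * L * 1 \<le> (e2/6) * L * n" using n1 e2 L by (intro mult_left_mono) auto
          then show ?thesis by simp
        qed
        finally show ?thesis by (simp add: algebra_simps)
      qed
      have main: "n * ln 3 + c * n + k n * ln (3 * n / \<delta> n) + c * k n + c * ln (3 / \<delta> n) / \<mu> + c \<le> e2 * n * L"
        using i1 i2 i3 i4 i5 i6 by linarith
      have anbk: "real a * n + real b * k n \<le> (ln 3 + L) / c * n + n + ln (3 * n / \<delta> n) / c * k n + k n"
      proof -
        have "real a * n \<le> ((ln 3 + L) / c + 1) * n" using aup la np by (intro mult_right_mono) auto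
        moreover have "real b * k n \<le> (ln (3 * n / \<delta> n) / c + 1) * k n"
          using bup kp by (intro mult_right_mono) auto
        ultimately show ?thesis by (simp add: algebra_simps)
      qed
      have kT: "(1 + e2) * n * L / c - 1 \<le> \<kappa> * T"
      proof -
        have "\<kappa> * ((1 + \<eta>) * (real n * L / D) - 1) \<le> \<kappa> * T" using Tlow ka by (intro mult_left_mono) auto
        moreover have "\<kappa> * ((1 + \<eta>) * (real n * L / D)) = (1 + e2) * n * L / c"
        proof -
          have "\<kappa> * ((1 + \<eta>) * (real n * L / D)) = (\<kappa> * (1 + \<eta>) / D) * (real n * L)"
            by (simp add: divide_inverse mult_ac)
          also have "\<dots> = (1 + e2) / c * (real n * L)" by (simp only: kD)
          finally show ?thesis by (simp add: divide_inverse mult_ac)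
        qed
        moreover have "\<kappa> * ((1 + \<eta>) * (real n * L / D) - 1) = \<kappa> * ((1 + \<eta>) * (real n * L / D)) - \<kappa>"
          by (simp add: algebra_simps)
        ultimately show ?thesis using ka by linarith
      qed
      have key: "ln (3 / \<delta> n) \<le> \<mu> * (\<kappa> * T - (real a * n + real b * k n))"
      proof -
        have K1: "c * (real a * n + real b * k n) \<le> c * ((ln 3 + L) / c * n + n + ln (3 * n / \<delta> n) / c * k n + k n)"
          using anbk c0 by (intro mult_left_mono) auto
        have K2: "c * ((ln 3 + L) / c * n + n + ln (3 * n / \<delta> n) / c * k n + k n)
            = n * ln 3 + n * L + c * n + k n * ln (3 * n / \<delta> n) + c * k n"
          using c0 by (simp add: field_simps)
        have K3: "c * ((1 + e2) * n * L / c - 1) \<le> c * (\<kappa> * T)" using kT c0 by (intro mult_left_mono) auto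
        have K4: "c * ((1 + e2) * n * L / c - 1) = n * L + e2 * n * L - c" using c0 by (simp add: field_simps)
        have K5: "c * (ln (3 / \<delta> n) / \<mu>) = c * ln (3 / \<delta> n) / \<mu>" by simp
        have "c * (ln (3 / \<delta> n) / \<mu>) \<le> c * (\<kappa> * T) - c * (real a * n + real b * k n)"
          using K1 K2 K3 K4 K5 main by linarith
        then have "c * (ln (3 / \<delta> n) / \<mu>) \<le> c * (\<kappa> * T - (real a * n + real b * k n))"
          by (simp add: right_diff_distrib)
        then have "ln (3 / \<delta> n) / \<mu> \<le> \<kappa> * T - (real a * n + real b * k n)" using c0
          by (rule mult_left_le_imp_le)
        then show ?thesis using mu by (simp add: field_simps)
      qed
      have "\<beta>^T \<le> exp (-(\<mu>*\<kappa>))^T" using be by (intro power_mono) auto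
      also have "\<dots> = exp (- (\<mu>*\<kappa>*T))" by (simp add: exp_of_nat_mult[symmetric] algebra_simps)
      finally have "\<beta>^T * exp (\<mu> * (real a * n + real b * k n)) \<le> exp (- (\<mu>*\<kappa>*T)) * exp (\<mu> * (real a * n + real b * k n))"
        by (simp add: mult_right_mono)
      also have "\<dots> = exp (- (\<mu> * (\<kappa> * T - (real a * n + real b * k n))))" by (simp add: algebra_simps flip: exp_add)
      also have "\<dots> \<le> exp (- ln (3 / \<delta> n))" using key by simp
      also have "\<dots> = \<delta> n / 3" using dp by (simp add: exp_minus)
      finally show ?thesis .
    qed
    define A where "A = return_pmf (aq n (k n) a b, aout n (k n) a b)"
    have valid: "valid_alg n A" unfolding A_def valid_alg_def using aq_less[OF n1] by simp
    have err: "err_prob p n (k n) A T x \<le> \<delta> n" for x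
    proof -
      have "err_prob p n (k n) A T x \<le> exp (-c*b) * n + exp (-c*a) * k n + \<beta>^T * exp (\<mu> * (real a * n + real b * k n))"
        unfolding A_def c_def \<beta>_def using ub_err[OF n1 kn(1) a1 b1 p, of \<mu> T x] mu by simp
      then show ?thesis using E1 E2 E3 by simp
    qed
    have "worst_err p n (k n) A T \<le> \<delta> n"
      unfolding worst_err_def
    proof (rule cSUP_least)
      show "inputs n \<noteq> {}" by (auto simp: inputs_def intro!: exI[of _ "\<lambda>_. False"])
    qed (use err in auto)
    moreover have "real T \<le> (1 + \<eta>) * (real n * ln (real (k n) / \<delta> n) / D_KL p)"
      using Tup by (simp add: L_def D_def)
    ultimately show ?case using valid by blast
  qed
qed

end

theorem corollary2:
  fixes p \<epsilon> :: real and k :: "nat \<Rightarrow> nat" and \<delta> :: "nat \<Rightarrow> real"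
  assumes "0 < p" and "p < 1/2" and "0 < \<epsilon>"
    and "(\<lambda>n. real (k n)) \<in> o(\<lambda>n. real n)"
    and "\<delta> \<longlonglongrightarrow> 0"
    and "\<forall>\<^sub>F n in sequentially. 1 \<le> k n"
    and "\<forall>\<^sub>F n in sequentially. real n powr (-1 + \<epsilon>) \<le> \<delta> n"
  shows "\<forall>\<eta>>0. \<forall>\<^sub>F n in sequentially.
     (\<exists>T A. valid_alg n A \<and> real T \<le> (1 + \<eta>) * (real n * ln (real (k n) / \<delta> n) / D_KL p)
              \<and> worst_err p n (k n) A T \<le> \<delta> n)
   \<and> (\<forall>T A. valid_alg n A \<and> worst_err p n (k n) A T \<le> \<delta> n
              \<longrightarrow> (1 - \<eta>) * (real n * ln (real (k n) / \<delta> n) / D_KL p) \<le> real T)"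
proof (intro allI impI)
  fix \<eta> :: real assume eta: "0 < \<eta>"
  interpret asy k \<delta> \<epsilon> by unfold_locales (use assms in auto)
  show "\<forall>\<^sub>F n in sequentially.
     (\<exists>T A. valid_alg n A \<and> real T \<le> (1 + \<eta>) * (real n * ln (real (k n) / \<delta> n) / D_KL p)
              \<and> worst_err p n (k n) A T \<le> \<delta> n)
   \<and> (\<forall>T A. valid_alg n A \<and> worst_err p n (k n) A T \<le> \<delta> n
              \<longrightarrow> (1 - \<eta>) * (real n * ln (real (k n) / \<delta> n) / D_KL p) \<le> real T)"
    using upper[OF assms(1,2) eta] lower[OF assms(1,2) eta] by (rule eventually_conj)
qed

end
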